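(* Let $n\ge3$. For an affine $n$-diagram $D$ with at least one vertical edge, let $S_1$ (resp. $S_2$) be the involution of $\{1,\dots,n\}$ interchanging $i$ and $j$ exactly when the top nodes (resp. bottom nodes) $i$ and $j$ of $D$ are joined by an edge. Then $S_1,S_2\in\mathrm{Ann}(n)\cap I(t)$ for some $t>0$, and $D\mapsto[S_1,S_2,w(D)]$ is a bijection from the set of affine $n$-diagrams with at least one vertical edge onto the set of triples $[S_1,S_2,w]$ with $S_1,S_2\in\mathrm{Ann}(n)\cap I(t)$ for some $t>0$ and $w\in\mathbb{Z}$.
   Context: An affine $n$-diagram consists of the nodes $\mathbb{Z}\times\{0,1\}\subset\mathbb{R}^2$ (bottom row $\mathbb{Z}\times\{0\}$, top row $\mathbb{Z}\times\{1\}$) together with curves called edges such that: every node is an endpoint of exactly one edge; edges lie in $\mathbb{R}\times[0,1]$; an edge not joining two nodes is an infinite horizontal line meeting no node, and there are finitely many such; no two edges intersect; the diagram is invariant under horizontal translation by $n$. Diagrams are taken up to isotopy; equivalently, drawn on a cylinder with nodes labelled $1,\dots,n$ (the residues mod $n$ of the node positions) on a top and a bottom circle. An edge is vertical if it joins a top node to a bottom node. An involution $S$ of $\{1,\dots,n\}$ is annular if for each pair $i<j$ interchanged by $S$: $S(\{i,\dots,j\})=\{i,\dots,j\}$, and $\{i,\dots,j\}$ contains either no fixed point of $S$ or all fixed points of $S$. $\mathrm{Ann}(n)$ is the set of annular involutions and $I(t)$ the set of involutions with exactly $t$ fixed points. For a diagram $D$ with a vertical edge, $w_1(D)$ is the number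 of pairs $(i,j)\in\mathbb{Z}^2$ with $i>j$ such that bottom node $(j,0)$ is joined to top node $(i,1)$ by an edge crossing the line $x=1/2$; $w_2(D)$ is the same with $i<j$; $w(D)=w_1(D)-w_2(D)$. *)

theory Defs
  imports Main
begin

text \<open>Nodes: (k, False) is the bottom node (k,0), (k, True) is the top node (k,1).
An affine n-diagram with at least one vertical edge has no horizontal lines (they would
meet the vertical edge), so up to isotopy it is determined by the perfect matching
of nodes given by its edges. We encode it as a fixed-point-free involution m on nodes
(m x is the other endpoint of the edge at x), invariant under translation by n and
drawable without crossings in the strip.\<close>

type_synonym node = "int \<times> bool"

text \<open>Linear order of the boundary points of the strip: bottom row left to right,
then top row right to left. Two chords can be drawn disjointly in the strip iff
they do not interleave in this order.\<close>
definition bnd_less :: "node \<Rightarrow> node \<Rightarrow> bool" where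
  "bnd_less x y \<longleftrightarrow>
     (\<not> snd x \<and> snd y) \<or>
     (\<not> snd x \<and> \<not> snd y \<and> fst x < fst y) \<or>
     (snd x \<and> snd y \<and> fst y < fst x)"

definition is_affine_diagram_matching :: "nat \<Rightarrow> (node \<Rightarrow> node) \<Rightarrow> bool" where
  "is_affine_diagram_matching n m \<longleftrightarrow>
     (\<forall>x. m (m x) = x \<and> m x \<noteq> x) \<and>
     (\<forall>k b. m (k + int n, b) = (fst (m (k, b)) + int n, snd (m (k, b)))) \<and>
     \<not> (\<exists>a c. bnd_less a c \<and> bnd_less c (m a) \<and> bnd_less (m a) (m c))"

definition has_vertical_edge :: "(node \<Rightarrow> node) \<Rightarrow> bool" where
  "has_vertical_edge m \<longleftrightarrow> (\<exists>x. snd (m x) \<noteq> snd x)"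

definition diagrams_vert :: "nat \<Rightarrow> (node \<Rightarrow> node) set" where
  "diagrams_vert n = {m. is_affine_diagram_matching n m \<and> has_vertical_edge m}"

definition lab :: "nat \<Rightarrow> int \<Rightarrow> nat" where
  "lab n k = nat ((k - 1) mod int n + 1)"

definition row_inv :: "nat \<Rightarrow> bool \<Rightarrow> (node \<Rightarrow> node) \<Rightarrow> nat \<Rightarrow> nat" where
  "row_inv n b m i =
     (if i \<in> {1..n} \<and> snd (m (int i, b)) = b then lab n (fst (m (int i, b))) else i)"

definition S1 :: "nat \<Rightarrow> (node \<Rightarrow> node) \<Rightarrow> nat \<Rightarrow> nat" where
  "S1 n m = row_inv n True m"

definition S2 :: "nat \<Rightarrow> (node \<Rightarrow> node) \<Rightarrow> nat \<Rightarrow> nat" where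
  "S2 n m = row_inv n False m"

text \<open>w1: vertical edges from bottom (j,0) to top (i,1) with i > j crossing x = 1/2,
i.e. j \<le> 0 < i; w2: those with i < j crossing x = 1/2, i.e. i \<le> 0 < j.\<close>
definition w1 :: "(node \<Rightarrow> node) \<Rightarrow> nat" where
  "w1 m = card {(i, j). m (j, False) = (i, True) \<and> i > j \<and> j \<le> 0 \<and> 1 \<le> i}"

definition w2 :: "(node \<Rightarrow> node) \<Rightarrow> nat" where
  "w2 m = card {(i, j). m (j, False) = (i, True) \<and> i < j \<and> i \<le> 0 \<and> 1 \<le> j}"

definition wind :: "(node \<Rightarrow> node) \<Rightarrow> int" where
  "wind m = int (w1 m) - int (w2 m)"

definition involutions :: "nat \<Rightarrow> (nat \<Rightarrow> nat) set" where
  "involutions n = {S. (\<forall>i\<in>{1..n}. S i \<in> {1..n} \<and> S (S i) = i) \<and>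
                       (\<forall>i. i \<notin> {1..n} \<longrightarrow> S i = i)}"

definition fixpts :: "nat \<Rightarrow> (nat \<Rightarrow> nat) \<Rightarrow> nat set" where
  "fixpts n S = {i \<in> {1..n}. S i = i}"

definition Inv_t :: "nat \<Rightarrow> nat \<Rightarrow> (nat \<Rightarrow> nat) set" where
  "Inv_t n t = {S \<in> involutions n. card (fixpts n S) = t}"

definition Ann :: "nat \<Rightarrow> (nat \<Rightarrow> nat) set" where
  "Ann n = {S \<in> involutions n. \<forall>i j. i \<in> {1..n} \<and> j \<in> {1..n} \<and> i < j \<and> S i = j \<longrightarrow>
              S ` {i..j} = {i..j} \<and>
              ({i..j} \<inter> fixpts n S = {} \<or> fixpts n S \<subseteq> {i..j})}"

end

theory Submission
  imports Defs
begin


lemma lab_int_eq: "n > 0 \<Longrightarrow> int (lab n k) = (k - 1) mod int n + 1"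
  unfolding lab_def by simp

lemma lab_range: "n > 0 \<Longrightarrow> 1 \<le> lab n k \<and> lab n k \<le> n"
proof -
  assume n: "n > 0"
  have h: "int (lab n k) = (k - 1) mod int n + 1" by (rule lab_int_eq[OF n])
  have "0 \<le> (k - 1) mod int n" "(k - 1) mod int n < int n" using n by simp_all
  then have "1 \<le> int (lab n k)" "int (lab n k) \<le> int n" using h by linarith+
  then show ?thesis by simp
qed

lemma lab_mod: "n > 0 \<Longrightarrow> int (lab n k) mod int n = k mod int n"
  by (simp add: lab_int_eq mod_add_left_eq)

lemma lab_decomp: "n > 0 \<Longrightarrow> k = int (lab n k) + ((k - 1) div int n) * int n"
  by (simp add: lab_int_eq)

lemma lab_int: "i \<in> {1..n} \<Longrightarrow> lab n (int i) = i"
  unfolding lab_def by auto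

lemma lab_shift: "n > 0 \<Longrightarrow> lab n (k + q * int n) = lab n k"
proof -
  have "k + q * int n - 1 = (k - 1) + q * int n" by simp
  then have "(k + q * int n - 1) mod int n = (k - 1) mod int n" by (metis mod_mult_self1)
  then show ?thesis unfolding lab_def by simp
qed

lemma lab_shift1: "n > 0 \<Longrightarrow> lab n (k + int n) = lab n k"
  using lab_shift[of n k 1] by simp

lemma lab_eq_iff: "n > 0 \<Longrightarrow> lab n k = lab n k' \<longleftrightarrow> k mod int n = k' mod int n"
proof
  assume n: "n > 0" and "lab n k = lab n k'"
  then have "int (lab n k) mod int n = int (lab n k') mod int n" by simp
  then show "k mod int n = k' mod int n" using lab_mod[OF n] by simp
next
  assume n: "n > 0" and h: "k mod int n = k' mod int n"
  have "(k - 1) mod int n = (k mod int n - 1) mod int n" by (simp add: mod_diff_left_eq)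
  also have "\<dots> = (k' mod int n - 1) mod int n" using h by simp
  also have "\<dots> = (k' - 1) mod int n" by (simp add: mod_diff_left_eq)
  finally show "lab n k = lab n k'" unfolding lab_def by simp
qed

lemma lab_eq_iff2: "n > 0 \<Longrightarrow> int (lab n k) = j \<longleftrightarrow> (1 \<le> j \<and> j \<le> int n \<and> k mod int n = j mod int n)"
proof
  assume n: "n > 0" and "int (lab n k) = j"
  then show "1 \<le> j \<and> j \<le> int n \<and> k mod int n = j mod int n"
    using lab_range[OF n, of k] lab_mod[OF n, of k] by auto
next
  assume n: "n > 0" and h: "1 \<le> j \<and> j \<le> int n \<and> k mod int n = j mod int n"
  then have j: "j = int (nat j)" "nat j \<in> {1..n}" by auto
  have "lab n (int (nat j)) = nat j" using lab_int[OF j(2)] .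
  moreover have "lab n k = lab n (int (nat j))" using lab_eq_iff[OF n, of k "int (nat j)"] h j(1) by simp
  ultimately show "int (lab n k) = j" using j(1) by simp
qed

lemma mod_eq_close: "(k::int) mod N = k' mod N \<Longrightarrow> \<bar>k - k'\<bar> < N \<Longrightarrow> k = k'"
proof -
  assume a: "(k::int) mod N = k' mod N" "\<bar>k - k'\<bar> < N"
  then have "N dvd (k - k')" by (simp add: mod_eq_dvd_iff)
  then obtain c where c: "k - k' = N * c" by (auto simp: dvd_def)
  have N: "N > 0" using a(2) by linarith
  show "k = k'"
  proof (rule ccontr)
    assume "k \<noteq> k'"
    then have "c \<noteq> 0" using c by auto
    then have "\<bar>c\<bar> \<ge> 1" by linarith
    then have "N * \<bar>c\<bar> \<ge> N" using N by simp
    then show False using a(2) c N by (simp add: abs_mult)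
  qed
qed

definition perV :: "nat \<Rightarrow> int set \<Rightarrow> bool" where
  "perV n V \<longleftrightarrow> (\<forall>k. (k + int n \<in> V) = (k \<in> V))"

lemma perV_nat: "perV n V \<Longrightarrow> (k + int m * int n \<in> V) = (k \<in> V)"
proof (induction m arbitrary: k)
  case 0 then show ?case by simp
next
  case (Suc m)
  have "k + int (Suc m) * int n = (k + int m * int n) + int n" by (simp add: algebra_simps)
  then show ?case using Suc unfolding perV_def by metis
qed

lemma perV_int: "perV n V \<Longrightarrow> (k + q * int n \<in> V) = (k \<in> V)"
proof (cases "q \<ge> 0")
  case True
  assume p: "perV n V"
  then show ?thesis using perV_nat[OF p, of k "nat q"] True by simp
next
  case False
  assume p: "perV n V"
  have "k = (k + q * int n) + int (nat (-q)) * int n" using False by simp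
  then show ?thesis using perV_nat[OF p, of "k + q * int n" "nat (-q)"] by metis
qed

lemma perV_lab: "n > 0 \<Longrightarrow> perV n V \<Longrightarrow> (k \<in> V) = (int (lab n k) \<in> V)"
  using perV_int[of n V "int (lab n k)" "(k - 1) div int n"] lab_decomp[of n k] by simp

definition cnt :: "int set \<Rightarrow> int \<Rightarrow> int" where
  "cnt V x = int (card (V \<inter> {1..x})) - int (card (V \<inter> {x<..0}))"

lemma cnt_diff: "y \<le> x \<Longrightarrow> cnt V x - cnt V y = int (card (V \<inter> {y<..x}))"
proof -
  assume yx: "y \<le> x"
  consider "0 \<le> y" | "x \<le> 0" | "y < 0 \<and> 0 < x" by linarith
  then show ?thesis
  proof cases
    case 1
    have "V \<inter> {1..x} = (V \<inter> {1..y}) \<union> (V \<inter> {y<..x})" using 1 yx by auto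
    moreover have "(V \<inter> {1..y}) \<inter> (V \<inter> {y<..x}) = {}" by auto
    ultimately have "card (V \<inter> {1..x}) = card (V \<inter> {1..y}) + card (V \<inter> {y<..x})"
      by (simp add: card_Un_disjoint)
    moreover have "V \<inter> {x<..0} = {}" "V \<inter> {y<..0} = {}" using 1 yx by auto
    ultimately show ?thesis unfolding cnt_def by simp
  next
    case 2
    have "V \<inter> {y<..0} = (V \<inter> {y<..x}) \<union> (V \<inter> {x<..0})" using 2 yx by auto
    moreover have "(V \<inter> {y<..x}) \<inter> (V \<inter> {x<..0}) = {}" by auto
    ultimately have "card (V \<inter> {y<..0}) = card (V \<inter> {y<..x}) + card (V \<inter> {x<..0})"
      by (simp add: card_Un_disjoint)
    moreover have "V \<inter> {1..x} = {}" "V \<inter> {1..y} = {}" using 2 yx by auto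
    ultimately show ?thesis unfolding cnt_def by simp
  next
    case 3
    have "V \<inter> {y<..x} = (V \<inter> {y<..0}) \<union> (V \<inter> {1..x})" using 3 by auto
    moreover have "(V \<inter> {y<..0}) \<inter> (V \<inter> {1..x}) = {}" by auto
    ultimately have "card (V \<inter> {y<..x}) = card (V \<inter> {y<..0}) + card (V \<inter> {1..x})"
      by (simp add: card_Un_disjoint)
    moreover have "V \<inter> {x<..0} = {}" "V \<inter> {1..y} = {}" using 3 by auto
    ultimately show ?thesis unfolding cnt_def by simp
  qed
qed

lemma cnt_step: "cnt V x = cnt V (x - 1) + (if x \<in> V then 1 else 0)"
proof -
  have "{x - 1<..x} = {x}" by auto
  then have "V \<inter> {x - 1<..x} = (if x \<in> V then {x} else {})" by auto
  then show ?thesis using cnt_diff[of "x - 1" x V] by (auto split: if_splits)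
qed

lemma cnt_mono: "y \<le> x \<Longrightarrow> cnt V y \<le> cnt V x"
  using cnt_diff[of y x V] by simp

lemma cnt_strict: "y < x \<Longrightarrow> x \<in> V \<Longrightarrow> cnt V y < cnt V x"
proof -
  assume a: "y < x" "x \<in> V"
  have "V \<inter> {y<..x} \<noteq> {}" using a by auto
  then have "card (V \<inter> {y<..x}) > 0" by (simp add: card_gt_0_iff)
  then show ?thesis using cnt_diff[of y x V] a by simp
qed

lemma cnt_inj: "u \<in> V \<Longrightarrow> v \<in> V \<Longrightarrow> cnt V u = cnt V v \<Longrightarrow> u = v"
  by (metis cnt_strict linorder_neq_iff less_irrefl)

lemma cnt_pos: "v \<in> V \<Longrightarrow> (cnt V v \<ge> 1) = (v \<ge> 1)"
proof
  assume "v \<in> V" "1 \<le> cnt V v"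
  show "v \<ge> 1"
  proof (rule ccontr)
    assume "\<not> v \<ge> 1"
    then have "V \<inter> {1..v} = {}" by auto
    then show False using \<open>1 \<le> cnt V v\<close> unfolding cnt_def by simp
  qed
next
  assume "v \<in> V" "v \<ge> 1"
  then have "V \<inter> {1..v} \<noteq> {}" by auto
  then have "card (V \<inter> {1..v}) > 0" by (simp add: card_gt_0_iff)
  moreover have "V \<inter> {v<..0} = {}" using \<open>v \<ge> 1\<close> by auto
  ultimately show "cnt V v \<ge> 1" unfolding cnt_def by simp
qed

lemma window_card:
  assumes n: "n > 0" and p: "perV n V"
  shows "card (V \<inter> {x<..x + int n}) = card (V \<inter> {1..int n})"
proof -
  have "bij_betw (\<lambda>k. int (lab n k)) (V \<inter> {x<..x + int n}) (V \<inter> {1..int n})"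
  proof (rule bij_betwI')
    fix a b assume ab: "a \<in> V \<inter> {x<..x + int n}" "b \<in> V \<inter> {x<..x + int n}"
    have "\<bar>a - b\<bar> < int n" using ab by auto
    show "(int (lab n a) = int (lab n b)) = (a = b)"
    proof
      assume "int (lab n a) = int (lab n b)"
      then have "a mod int n = b mod int n" using lab_eq_iff[OF n, of a b] by simp
      then show "a = b" using mod_eq_close[of a "int n" b] \<open>\<bar>a - b\<bar> < int n\<close> by simp
    qed simp
  next
    fix a assume a: "a \<in> V \<inter> {x<..x + int n}"
    have "int (lab n a) \<in> V" using perV_lab[OF n p, of a] a by simp
    moreover have "1 \<le> lab n a" "lab n a \<le> n" using lab_range[OF n, of a] by simp_all
    ultimately show "int (lab n a) \<in> V \<inter> {1..int n}" by simp
  next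
    fix i assume i: "i \<in> V \<inter> {1..int n}"
    define k where "k = x + 1 + (i - x - 1) mod int n"
    have "k mod int n = (x + 1 + (i - x - 1)) mod int n" unfolding k_def by (rule mod_add_right_eq)
    then have km: "k mod int n = i mod int n" by simp
    have "int (lab n k) = i" using lab_eq_iff2[OF n, of k i] i km by auto
    moreover have "k \<in> {x<..x + int n}"
    proof -
      have "0 \<le> (i - x - 1) mod int n" "(i - x - 1) mod int n < int n" using n by simp_all
      then show ?thesis unfolding k_def by simp
    qed
    moreover have "k \<in> V" using perV_lab[OF n p, of k] i \<open>int (lab n k) = i\<close> by simp
    ultimately show "\<exists>k\<in>V \<inter> {x<..x + int n}. i = int (lab n k)" by auto
  qed
  then show ?thesis by (rule bij_betw_same_card)
qed

lemma cnt_period: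
  assumes n: "n > 0" and p: "perV n V"
  shows "cnt V (x + int n) = cnt V x + int (card (V \<inter> {1..int n}))"
  using cnt_diff[of x "x + int n" V] window_card[OF n p, of x] by simp

lemma cnt_period_int:
  assumes n: "n > 0" and p: "perV n V"
  shows "cnt V (x + q * int n) = cnt V x + q * int (card (V \<inter> {1..int n}))"
proof -
  have nat_case: "cnt V (y + int m * int n) = cnt V y + int m * int (card (V \<inter> {1..int n}))" for y m
  proof (induction m)
    case 0 then show ?case by simp
  next
    case (Suc m)
    have "y + int (Suc m) * int n = (y + int m * int n) + int n" by (simp add: algebra_simps)
    then show ?case using Suc cnt_period[OF n p, of "y + int m * int n"] by (simp add: algebra_simps)
  qed
  show ?thesis
  proof (cases "q \<ge> 0")
    case True then show ?thesis using nat_case[of x "nat q"] by simp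
  next
    case False
    have e: "(x + q * int n) + int (nat (-q)) * int n = x" using False by simp
    have "cnt V x = cnt V (x + q * int n) + int (nat (-q)) * int (card (V \<inter> {1..int n}))"
      using nat_case[of "x + q * int n" "nat (-q)"] unfolding e .
    moreover have "int (nat (-q)) = -q" using False by simp
    ultimately have "cnt V x = cnt V (x + q * int n) - q * int (card (V \<inter> {1..int n}))" by simp
    then show ?thesis by simp
  qed
qed

lemma cnt_zero: "cnt V 0 = 0" unfolding cnt_def by simp

lemma cnt_surj:
  assumes n: "n > 0" and p: "perV n V" and t: "card (V \<inter> {1..int n}) > 0"
  shows "\<exists>v\<in>V. cnt V v = c"
proof -
  define t' where "t' = int (card (V \<inter> {1..int n}))"
  have t'pos: "t' \<ge> 1" using t unfolding t'_def by simp
  have cq: "cnt V (q * int n) = q * t'" for q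
    using cnt_period_int[OF n p, of 0 q] cnt_zero unfolding t'_def by simp
  define q0 where "q0 = - \<bar>c\<bar> - 1"
  define q1 where "q1 = \<bar>c\<bar>"
  have "q0 * (t' - 1) \<le> 0" using t'pos by (intro mult_nonpos_nonneg) (simp_all add: q0_def)
  then have lo: "cnt V (q0 * int n) < c" using cq[of q0] unfolding q0_def by (simp add: algebra_simps)
  have "q1 * (t' - 1) \<ge> 0" using t'pos by (intro mult_nonneg_nonneg) (simp_all add: q1_def)
  then have hi: "cnt V (q1 * int n) \<ge> c" using cq[of q1] unfolding q1_def by (simp add: algebra_simps)
  have "(q1 - q0) * int n \<ge> 0" by (intro mult_nonneg_nonneg) (simp_all add: q0_def q1_def)
  then have qq: "q0 * int n + int (nat (q1 * int n - q0 * int n)) = q1 * int n" by (simp add: algebra_simps)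
  define P where "P = (\<lambda>d::nat. cnt V (q0 * int n + int d) \<ge> c)"
  have ex: "P (nat (q1 * int n - q0 * int n))" unfolding P_def using hi qq by simp
  define d where "d = (LEAST d. P d)"
  have Pd: "P d" unfolding d_def using ex by (rule LeastI)
  have d0: "d \<noteq> 0"
  proof
    assume "d = 0" then show False using Pd lo unfolding P_def by simp
  qed
  have "\<not> P (d - 1)"
  proof
    assume "P (d - 1)"
    then have "(LEAST d. P d) \<le> d - 1" by (rule Least_le)
    then show False using d0 unfolding d_def[symmetric] by simp
  qed
  define x where "x = q0 * int n + int d"
  have h1: "cnt V x \<ge> c" using Pd unfolding P_def x_def .
  have h2: "cnt V (x - 1) < c" using \<open>\<not> P (d - 1)\<close> d0 unfolding P_def x_def by (simp add: of_nat_diff algebra_simps)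
  have "x \<in> V" using cnt_step[of V x] h1 h2 by (auto split: if_splits)
  moreover have "cnt V x = c" using cnt_step[of V x] h1 h2 \<open>x \<in> V\<close> by simp
  ultimately show ?thesis by auto
qed



definition row_ok :: "nat \<Rightarrow> int set \<Rightarrow> (int \<Rightarrow> int) \<Rightarrow> bool" where
  "row_ok n V P \<longleftrightarrow> perV n V \<and> V \<noteq> {} \<and>
     (\<forall>k. k \<notin> V \<longrightarrow> P k \<notin> V \<and> P (P k) = k \<and> P k \<noteq> k \<and> P (k + int n) = P k + int n) \<and>
     (\<forall>k v. k \<notin> V \<longrightarrow> v \<in> V \<longrightarrow> \<not> (k < v \<and> v < P k) \<and> \<not> (P k < v \<and> v < k)) \<and>
     (\<forall>k l. k \<notin> V \<longrightarrow> l \<notin> V \<longrightarrow> \<not> (k < l \<and> l < P k \<and> P k < P l))"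

definition rowS :: "nat \<Rightarrow> int set \<Rightarrow> (int \<Rightarrow> int) \<Rightarrow> nat \<Rightarrow> nat" where
  "rowS n V P i = (if i \<in> {1..n} \<and> int i \<notin> V then lab n (P (int i)) else i)"

lemma row_okD:
  assumes "row_ok n V P"
  shows "perV n V" "V \<noteq> {}"
    "\<And>k. k \<notin> V \<Longrightarrow> P k \<notin> V" "\<And>k. k \<notin> V \<Longrightarrow> P (P k) = k"
    "\<And>k. k \<notin> V \<Longrightarrow> P k \<noteq> k" "\<And>k. k \<notin> V \<Longrightarrow> P (k + int n) = P k + int n"
    "\<And>k v. k \<notin> V \<Longrightarrow> v \<in> V \<Longrightarrow> k < v \<Longrightarrow> v < P k \<Longrightarrow> False"
    "\<And>k v. k \<notin> V \<Longrightarrow> v \<in> V \<Longrightarrow> P k < v \<Longrightarrow> v < k \<Longrightarrow> False"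
    "\<And>k l. k \<notin> V \<Longrightarrow> l \<notin> V \<Longrightarrow> k < l \<Longrightarrow> l < P k \<Longrightarrow> P k < P l \<Longrightarrow> False"
  using assms unfolding row_ok_def by blast+

lemma mult_ge1: "(q::int) \<ge> 1 \<Longrightarrow> N \<ge> 0 \<Longrightarrow> q * N \<ge> N"
  using mult_right_mono[of 1 q N] by simp
lemma mult_le0: "(q::int) \<le> 0 \<Longrightarrow> N \<ge> 0 \<Longrightarrow> q * N \<le> 0"
  using mult_right_mono[of q 0 N] by simp
lemma mult_ge0: "(q::int) \<ge> 0 \<Longrightarrow> N \<ge> 0 \<Longrightarrow> q * N \<ge> 0"
  by simp
lemma mult_lem1: "(q::int) \<le> -1 \<Longrightarrow> N \<ge> 0 \<Longrightarrow> q * N \<le> -N"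
  using mult_right_mono[of q "-1" N] by simp
lemma mult_lem2: "(q::int) \<le> -2 \<Longrightarrow> N \<ge> 0 \<Longrightarrow> q * N \<le> -2 * N"
  using mult_right_mono[of q "-2" N] by simp

lemma P_shift:
  assumes r: "row_ok n V P" and k: "k \<notin> V"
  shows "P (k + q * int n) = P k + q * int n"
proof -
  have p: "perV n V" using row_okD[OF r] by simp
  have nat_case: "P (y + int m * int n) = P y + int m * int n" if "y \<notin> V" for y m
  proof (induction m)
    case 0 then show ?case by simp
  next
    case (Suc m)
    have e: "y + int (Suc m) * int n = (y + int m * int n) + int n" by (simp add: algebra_simps)
    have "y + int m * int n \<notin> V" using perV_int[OF p, of y "int m"] that by simp
    then have "P ((y + int m * int n) + int n) = P (y + int m * int n) + int n" using row_okD(6)[OF r] by blast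
    then show ?case unfolding e using Suc by (simp add: algebra_simps)
  qed
  show ?thesis
  proof (cases "q \<ge> 0")
    case True then show ?thesis using nat_case[OF k, of "nat q"] by simp
  next
    case False
    have kq: "k + q * int n \<notin> V" using perV_int[OF p, of k q] k by simp
    have e: "(k + q * int n) + int (nat (-q)) * int n = k" using False by simp
    have "P k = P (k + q * int n) + int (nat (-q)) * int n"
      using nat_case[OF kq, of "nat (-q)"] unfolding e .
    moreover have "int (nat (-q)) = -q" using False by simp
    ultimately have "P k = P (k + q * int n) - q * int n" by simp
    then show ?thesis by simp
  qed
qed

lemma window_V:
  assumes n: "n > 0" and p: "perV n V" and ne: "V \<noteq> {}"
  shows "\<exists>v\<in>V. x \<le> v \<and> v < x + int n"
proof -
  obtain v0 where v0: "v0 \<in> V" using ne by auto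
  define v where "v = x + (v0 - x) mod int n"
  have "v = v0 + (- ((v0 - x) div int n)) * int n" unfolding v_def
    by (simp add: algebra_simps)
  then have "v \<in> V" using perV_int[OF p, of v0 "- ((v0 - x) div int n)"] v0 by simp
  moreover have "0 \<le> (v0 - x) mod int n" "(v0 - x) mod int n < int n" using n by simp_all
  ultimately have "v \<in> V \<and> x \<le> v \<and> v < x + int n" unfolding v_def by simp
  then show ?thesis by blast
qed

lemma lab_P_ne:
  assumes n: "n > 0" and r: "row_ok n V P" and k: "k \<notin> V"
  shows "lab n (P k) \<noteq> lab n k"
proof
  assume "lab n (P k) = lab n k"
  then have "P k mod int n = k mod int n" using lab_eq_iff[OF n] by simp
  then obtain q where q: "P k = k + q * int n"
    by (metis mod_eq_dvd_iff dvd_def mult.commute add_diff_cancel_left' diff_add_cancel)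
  have "P (P k) = P k + q * int n" using P_shift[OF r k, of q] q by simp
  then have "k = k + 2 * q * int n" using row_okD(4)[OF r k] q by simp
  then have "q = 0" using n by simp
  then show False using q row_okD(5)[OF r k] by simp
qed

lemma P_lt:
  assumes n: "n > 0" and r: "row_ok n V P" and k: "k \<notin> V"
  shows "P k < k + int n"
proof (rule ccontr)
  assume "\<not> P k < k + int n"
  moreover have "P k \<noteq> k + int n"
  proof
    assume "P k = k + int n"
    then have "lab n (P k) = lab n k" using lab_shift1[OF n] by simp
    then show False using lab_P_ne[OF n r k] by simp
  qed
  ultimately have gt: "P k > k + int n" by simp
  obtain v where v: "v \<in> V" "k + 1 \<le> v" "v < k + 1 + int n"
    using window_V[OF n row_okD(1,2)[OF r], of "k+1"] by auto
  show False using row_okD(7)[OF r k v(1)] v gt by simp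
qed

lemma P_close:
  assumes n: "n > 0" and r: "row_ok n V P" and k: "k \<notin> V"
  shows "k < P k + int n" "P k < k + int n"
  using P_lt[OF n r k] P_lt[OF n r row_okD(3)[OF r k]] row_okD(4)[OF r k] by simp_all

lemma inside:
  assumes r: "row_ok n V P" and a: "a \<notin> V" and x: "x \<notin> V" and ax: "a < x" "x < P a"
  shows "a < P x \<and> P x < P a"
proof -
  have "P x \<noteq> a"
  proof
    assume "P x = a" then have "x = P a" using row_okD(4)[OF r x] by simp
    then show False using ax by simp
  qed
  moreover have "P x \<noteq> P a"
  proof
    assume "P x = P a" then have "x = a" using row_okD(4)[OF r x] row_okD(4)[OF r a] by metis
    then show False using ax by simp
  qed
  moreover have "\<not> P x > P a" using row_okD(9)[OF r a x] ax by auto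
  moreover have "\<not> P x < a"
  proof
    assume "P x < a"
    then show False using row_okD(9)[OF r row_okD(3)[OF r x] a] ax row_okD(4)[OF r x] by auto
  qed
  ultimately show ?thesis by auto
qed

lemma lab_P_rowS:
  assumes n: "n > 0" and r: "row_ok n V P" and k: "k \<notin> V"
  shows "lab n (P k) = rowS n V P (lab n k)"
proof -
  have p: "perV n V" using row_okD(1)[OF r] .
  have l: "lab n k \<in> {1..n}" using lab_range[OF n] by simp
  have lk: "int (lab n k) \<notin> V" using perV_lab[OF n p, of k] k by simp
  have "k = int (lab n k) + ((k - 1) div int n) * int n" by (rule lab_decomp[OF n])
  then have "P k = P (int (lab n k)) + ((k - 1) div int n) * int n"
    using P_shift[OF r lk] by metis
  then have "lab n (P k) = lab n (P (int (lab n k)))" using lab_shift[OF n] by simp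
  then show ?thesis unfolding rowS_def using l lk by simp
qed

lemma rowS_fix:
  assumes n: "n > 0" and r: "row_ok n V P" and i: "i \<in> {1..n}"
  shows "rowS n V P i = i \<longleftrightarrow> int i \<in> V"
proof -
  have "int i \<notin> V \<Longrightarrow> lab n (P (int i)) \<noteq> i"
    using lab_P_ne[OF n r, of "int i"] lab_int[OF i] by simp
  then show ?thesis unfolding rowS_def using i by auto
qed

lemma fixpts_rowS:
  assumes n: "n > 0" and r: "row_ok n V P"
  shows "fixpts n (rowS n V P) = {i \<in> {1..n}. int i \<in> V}"
  unfolding fixpts_def using rowS_fix[OF n r] by auto

lemma rowS_inv:
  assumes n: "n > 0" and r: "row_ok n V P"
  shows "rowS n V P \<in> involutions n"
proof -
  let ?S = "rowS n V P"
  have p: "perV n V" using row_okD(1)[OF r] .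
  have "?S i \<in> {1..n} \<and> ?S (?S i) = i" if i: "i \<in> {1..n}" for i
  proof (cases "int i \<in> V")
    case True then show ?thesis unfolding rowS_def using i by simp
  next
    case False
    have Si: "?S i = lab n (P (int i))" unfolding rowS_def using i False by simp
    have "lab n (P (P (int i))) = ?S (lab n (P (int i)))"
      using lab_P_rowS[OF n r row_okD(3)[OF r False]] .
    then have "?S (?S i) = lab n (int i)" using row_okD(4)[OF r False] Si by simp
    then show ?thesis using Si lab_range[OF n] lab_int[OF i] by simp
  qed
  moreover have "?S i = i" if "i \<notin> {1..n}" for i unfolding rowS_def using that by auto
  ultimately show ?thesis unfolding involutions_def by blast
qed

lemma inv_image_eq:
  assumes "\<forall>x\<in>I. S x \<in> I" "\<forall>x\<in>I. S (S x) = x"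
  shows "S ` I = I"
  using assms by (auto simp: image_iff) (metis)



lemma rowS_Ann_pair:
  assumes n: "n > 0" and r: "row_ok n V P"
    and i: "i \<in> {1..n}" and j: "j \<in> {1..n}" and ij: "i < j" and Sij: "rowS n V P i = j"
  shows "rowS n V P ` {i..j} = {i..j} \<and>
         ({i..j} \<inter> fixpts n (rowS n V P) = {} \<or> fixpts n (rowS n V P) \<subseteq> {i..j})"
proof -
  let ?S = "rowS n V P"
  have p: "perV n V" using row_okD(1)[OF r] .
  have iV: "int i \<notin> V" using Sij ij unfolding rowS_def by auto
  have lj: "lab n (P (int i)) = j" using Sij iV i unfolding rowS_def by simp
  define p where "p = P (int i)"
  have pV: "p \<notin> V" unfolding p_def using row_okD(3)[OF r iV] .
  have Pp: "P p = int i" unfolding p_def using row_okD(4)[OF r iV] .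
  define q where "q = (p - 1) div int n"
  have pq: "p = int j + q * int n" using lab_decomp[OF n, of p] lj unfolding q_def p_def by simp
  have cl: "int i < p + int n" "p < int i + int n" using P_close[OF n r iV] unfolding p_def by simp_all
  have q01: "q = 0 \<or> q = -1"
  proof (rule ccontr)
    assume "\<not> (q = 0 \<or> q = -1)"
    then have "q \<ge> 1 \<or> q \<le> -2" by linarith
    then show False
    proof
      assume "q \<ge> 1" then have "q * int n \<ge> int n" using mult_ge1 by simp
      then show False using pq cl ij by linarith
    next
      assume "q \<le> -2" then have "q * int n \<le> -2 * int n" using mult_lem2 by simp
      then show False using pq cl ij i j by auto
    qed
  qed
  have Sx: "?S x = lab n (P (int x))" if "x \<in> {1..n}" "int x \<notin> V" for x
    unfolding rowS_def using that by simp
  have fx: "fixpts n ?S = {x \<in> {1..n}. int x \<in> V}" by (rule fixpts_rowS[OF n r])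
  have inv: "?S \<in> involutions n" by (rule rowS_inv[OF n r])
  have SS: "\<forall>x\<in>{i..j}. ?S (?S x) = x" using inv i j unfolding involutions_def by auto
  from q01 show ?thesis
  proof
    assume "q = 0"
    then have pj: "p = int j" using pq by simp
    have noV: "\<And>v. v \<in> V \<Longrightarrow> int i < v \<Longrightarrow> v < int j \<Longrightarrow> False"
      using row_okD(7)[OF r iV] pj unfolding p_def by metis
    have into: "\<forall>x\<in>{i..j}. ?S x \<in> {i..j}"
    proof
      fix x assume x: "x \<in> {i..j}"
      consider "x = i" | "x = j" | "i < x \<and> x < j" using x by fastforce
      then show "?S x \<in> {i..j}"
      proof cases
        case 1 then show ?thesis using Sij ij by simp
      next
        case 2
        have "?S j = lab n (P (int j))" using Sx[OF j] pV pj by simp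
        also have "\<dots> = i" using Pp pj lab_int[OF i] by simp
        finally show ?thesis using 2 ij by simp
      next
        case 3
        have xV: "int x \<notin> V"
        proof
          assume "int x \<in> V" then show False using noV[of "int x"] 3 by simp
        qed
        have "int i < P (int x) \<and> P (int x) < int j"
          using inside[OF r iV xV] 3 pj unfolding p_def by simp
        moreover have "x \<in> {1..n}" using 3 i j by simp
        ultimately show ?thesis using Sx[of x] xV lab_int[of "nat (P (int x))" n] i j
          by (simp add: nat_le_iff le_nat_iff)
      qed
    qed
    have "{i..j} \<inter> fixpts n ?S = {}"
    proof -
      have nf: "False" if f: "f \<in> {i..j}" "int f \<in> V" for f
      proof -
        have "f \<noteq> i" using iV f by auto
        moreover have "f \<noteq> j" using pV pj f by auto
        ultimately show False using noV[OF f(2)] f by simp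
      qed
      show ?thesis unfolding fx
      proof (rule equals0I)
        fix f assume "f \<in> {i..j} \<inter> {x \<in> {1..n}. int x \<in> V}"
        then show False using nf[of f] by blast
      qed
    qed
    then show ?thesis using inv_image_eq[OF into SS] by simp
  next
    assume "q = -1"
    then have pj: "p = int j - int n" using pq by simp
    have aV: "p \<notin> V" by (rule pV)
    have noV: "\<And>v. v \<in> V \<Longrightarrow> p < v \<Longrightarrow> v < int i \<Longrightarrow> False"
      using row_okD(7)[OF r aV] Pp by metis
    have fsub: "fixpts n ?S \<subseteq> {i..j}"
    proof
      fix f assume "f \<in> fixpts n ?S"
      then have f: "f \<in> {1..n}" "int f \<in> V" using fx by auto
      show "f \<in> {i..j}"
      proof (rule ccontr)
        assume "f \<notin> {i..j}"
        then have "f < i \<or> f > j" by auto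
        then show False
        proof
          assume "f < i" then show False using noV[OF f(2)] pj f j by simp
        next
          assume "f > j"
          have "int f + (-1) * int n \<in> V" using perV_int[OF p, of "int f" "-1"] f by simp
          then show False using noV[of "int f - int n"] pj f i \<open>f > j\<close> by simp
        qed
      qed
    qed
    have into: "\<forall>x\<in>{i..j}. ?S x \<in> {i..j}"
    proof
      fix x assume x: "x \<in> {i..j}"
      consider "x = i" | "x = j" | "i < x \<and> x < j \<and> int x \<in> V" | "i < x \<and> x < j \<and> int x \<notin> V"
        using x by fastforce
      then show "?S x \<in> {i..j}"
      proof cases
        case 1 then show ?thesis using Sij ij by simp
      next
        case 2
        have "?S j = ?S (?S i)" using Sij by simp
        also have "\<dots> = i" using SS i ij by auto
        finally show ?thesis using 2 ij by simp
      next
        case 3 then show ?thesis unfolding rowS_def by auto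
      next
        case 4
        then have xV: "int x \<notin> V" and xn: "x \<in> {1..n}" using i j by auto
        define y where "y = P (int x)"
        have yV: "y \<notin> V" unfolding y_def using row_okD(3)[OF r xV] .
        have Py: "P y = int x" unfolding y_def using row_okD(4)[OF r xV] .
        define rr where "rr = lab n y"
        define q' where "q' = (y - 1) div int n"
        have yq: "y = int rr + q' * int n" using lab_decomp[OF n, of y] unfolding rr_def q'_def by simp
        have rr: "1 \<le> rr" "rr \<le> n" using lab_range[OF n] unfolding rr_def by auto
        have Sxr: "?S x = rr" using Sx[OF xn xV] unfolding rr_def y_def by simp
        have "\<not> rr < i"
        proof
          assume ri: "rr < i"
          define a' where "a' = p + q' * int n"
          have a'V: "a' \<notin> V" unfolding a'_def using perV_int[OF p, of p q'] aV by simp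
          have Pa': "P a' = int i + q' * int n" unfolding a'_def using P_shift[OF r aV, of q'] Pp by simp
          have "a' < y" using yq pj rr j unfolding a'_def by simp
          moreover have "y < P a'" unfolding Pa' using yq ri by simp
          ultimately have "a' < int x \<and> int x < P a'" using inside[OF r a'V yV] Py by simp
          then show False
          proof (cases "q' \<ge> 1")
            case True then have "q' * int n \<ge> int n" using mult_ge1 by simp
            then show False using \<open>a' < int x \<and> int x < P a'\<close> 4 pj unfolding a'_def by simp
          next
            case False then have "q' * int n \<le> 0" using mult_le0 by simp
            then show False using \<open>a' < int x \<and> int x < P a'\<close> 4 unfolding Pa' by simp
          qed
        qed
        moreover have "\<not> rr > j"
        proof
          assume rj: "rr > j"
          define b where "b = p + (q' + 1) * int n"
          have bV: "b \<notin> V" unfolding b_def using perV_int[OF p, of p "q' + 1"] aV by simp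
          have Pb: "P b = int i + (q' + 1) * int n" unfolding b_def using P_shift[OF r aV, of "q' + 1"] Pp by simp
          have "b < y" using yq pj rj unfolding b_def by (simp add: algebra_simps)
          moreover have "y < P b" unfolding Pb using yq rr i by (simp add: algebra_simps)
          ultimately have "b < int x \<and> int x < P b" using inside[OF r bV yV] Py by simp
          then show False
          proof (cases "q' \<ge> 0")
            case True then have "q' * int n \<ge> 0" by simp
            then show False using \<open>b < int x \<and> int x < P b\<close> 4 pj unfolding b_def by (simp add: algebra_simps)
          next
            case False then have "q' * int n \<le> - int n" using mult_lem1 by simp
            then show False using \<open>b < int x \<and> int x < P b\<close> 4 unfolding Pb by (simp add: algebra_simps)
          qed
        qed
        ultimately show ?thesis using Sxr by simp
      qed
    qed
    show ?thesis using inv_image_eq[OF into SS] fsub by simp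
  qed
qed

lemma rowS_Ann:
  assumes n: "n > 0" and r: "row_ok n V P"
  shows "rowS n V P \<in> Ann n"
  unfolding Ann_def using rowS_inv[OF n r] rowS_Ann_pair[OF n r] by blast

lemma rowS_Inv_t:
  assumes n: "n > 0" and r: "row_ok n V P"
  shows "rowS n V P \<in> Inv_t n (card {i \<in> {1..n}. int i \<in> V})"
  unfolding Inv_t_def using rowS_inv[OF n r] fixpts_rowS[OF n r] by simp

lemma row_unique_lt:
  assumes n: "n > 0" and r: "row_ok n V P" and r': "row_ok n V P'" and k: "k \<notin> V"
    and l: "lab n (P k) = lab n (P' k)" and lt: "P k < P' k"
  shows False
proof -
  have m: "P k mod int n = P' k mod int n" using l lab_eq_iff[OF n] by simp
  have ge: "P' k \<ge> P k + int n"
  proof (rule ccontr)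
    assume "\<not> P' k \<ge> P k + int n"
    then have "\<bar>P k - P' k\<bar> < int n" using lt by simp
    then show False using mod_eq_close[OF m] lt by simp
  qed
  obtain v where v: "v \<in> V" "P k + 1 \<le> v" "v < P k + 1 + int n"
    using window_V[OF n row_okD(1,2)[OF r], of "P k + 1"] by auto
  have "v \<noteq> P' k" using row_okD(3)[OF r' k] v by auto
  moreover have "v \<noteq> k" using k v by auto
  ultimately show False
    using row_okD(8)[OF r k v(1)] row_okD(7)[OF r' k v(1)] v ge by linarith
qed

lemma row_unique:
  assumes n: "n > 0" and r: "row_ok n V P" and r': "row_ok n V P'" and k: "k \<notin> V"
    and l: "lab n (P k) = lab n (P' k)"
  shows "P k = P' k"
proof (rule ccontr)
  assume "P k \<noteq> P' k"
  then have "P k < P' k \<or> P' k < P k" by linarith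
  then show False using row_unique_lt[OF n r r' k l] row_unique_lt[OF n r' r k l[symmetric]] by blast
qed



definition VA :: "nat \<Rightarrow> (nat \<Rightarrow> nat) \<Rightarrow> int set" where
  "VA n A = {k. A (lab n k) = lab n k}"

definition ffree :: "nat \<Rightarrow> (nat \<Rightarrow> nat) \<Rightarrow> nat \<Rightarrow> nat \<Rightarrow> bool" where
  "ffree n A i j \<longleftrightarrow> {min i j..max i j} \<inter> fixpts n A = {}"

definition adj :: "nat \<Rightarrow> (nat \<Rightarrow> nat) \<Rightarrow> nat \<Rightarrow> int" where
  "adj n A i = (if ffree n A i (A i) then 0 else if i < A i then - int n else int n)"

definition PA :: "nat \<Rightarrow> (nat \<Rightarrow> nat) \<Rightarrow> int \<Rightarrow> int" where
  "PA n A k = k - int (lab n k) + int (A (lab n k)) + adj n A (lab n k)"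

lemma PA_shift: "n > 0 \<Longrightarrow> PA n A (k + q * int n) = PA n A k + q * int n"
  unfolding PA_def using lab_shift[of n k q] by simp

lemma perV_VA: "n > 0 \<Longrightarrow> perV n (VA n A)"
  unfolding perV_def VA_def using lab_shift1 by simp

lemma inv_facts:
  assumes "A \<in> involutions n"
  shows "\<And>i. i \<in> {1..n} \<Longrightarrow> A i \<in> {1..n}" "\<And>i. i \<in> {1..n} \<Longrightarrow> A (A i) = i"
    "\<And>i. i \<notin> {1..n} \<Longrightarrow> A i = i"
  using assms unfolding involutions_def by auto

lemma lab_PA:
  assumes n: "n > 0" and A: "A \<in> involutions n"
  shows "lab n (PA n A k) = A (lab n k)"
proof -
  let ?i = "lab n k" let ?j = "A (lab n k)"
  have i: "?i \<in> {1..n}" using lab_range[OF n] by simp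
  have j: "?j \<in> {1..n}" using inv_facts(1)[OF A i] .
  have "k mod int n = int ?i mod int n" using lab_mod[OF n] by simp
  then have d1: "int n dvd (k - int ?i)" by (simp add: mod_eq_dvd_iff)
  have d2: "int n dvd adj n A ?i" unfolding adj_def by auto
  have "PA n A k - int ?j = (k - int ?i) + adj n A ?i" unfolding PA_def by simp
  then have "int n dvd (PA n A k - int ?j)" using d1 d2 by simp
  then have "PA n A k mod int n = int ?j mod int n" by (simp add: mod_eq_dvd_iff)
  then have "int (lab n (PA n A k)) = int ?j" using lab_eq_iff2[OF n, of "PA n A k" "int ?j"] j by simp
  then show ?thesis by simp
qed

lemma fixpts_iff: "fixpts n A = {i \<in> {1..n}. A i = i}" unfolding fixpts_def by simp

lemma ann_pair:
  assumes A: "A \<in> Ann n" and i: "i \<in> {1..n}" and j: "j \<in> {1..n}" and Aij: "A i = j" and ne: "i \<noteq> j"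
  shows "A ` {min i j..max i j} = {min i j..max i j} \<and>
         (ffree n A i j \<or> fixpts n A \<subseteq> {min i j..max i j})"
proof -
  have inv: "A \<in> involutions n" using A unfolding Ann_def by simp
  have Aji: "A j = i" using inv_facts(2)[OF inv i] Aij by simp
  have ann: "\<And>a b. a \<in> {1..n} \<Longrightarrow> b \<in> {1..n} \<Longrightarrow> a < b \<Longrightarrow> A a = b \<Longrightarrow>
     A ` {a..b} = {a..b} \<and> ({a..b} \<inter> fixpts n A = {} \<or> fixpts n A \<subseteq> {a..b})"
    using A unfolding Ann_def by blast
  show ?thesis
  proof (cases "i < j")
    case True then show ?thesis using ann[OF i j True Aij] unfolding ffree_def by simp
  next
    case False then have "j < i" using ne by simp
    then show ?thesis using ann[OF j i _ Aji] unfolding ffree_def by (simp add: min_def max_def)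
  qed
qed

lemma arc_base:
  assumes n: "n > 0" and A: "A \<in> Ann n" and ne: "fixpts n A \<noteq> {}"
    and i: "i \<in> {1..n}" and Ai: "A i \<noteq> i" and lt: "int i < PA n A (int i)"
    and x: "int i < x" "x < PA n A (int i)"
  shows "x \<notin> VA n A \<and> int i < PA n A x \<and> PA n A x < PA n A (int i)"
proof -
  have inv: "A \<in> involutions n" using A unfolding Ann_def by simp
  define j where "j = A i"
  have j: "j \<in> {1..n}" unfolding j_def using inv_facts(1)[OF inv i] .
  have li: "lab n (int i) = i" by (rule lab_int[OF i])
  have Pi: "PA n A (int i) = int j + adj n A i" unfolding PA_def li j_def by simp
  have ap: "A ` {min i j..max i j} = {min i j..max i j} \<and> (ffree n A i j \<or> fixpts n A \<subseteq> {min i j..max i j})"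
    using ann_pair[OF A i j _ ] Ai unfolding j_def by simp
  have fixI: "\<And>y. y \<in> {1..n} \<Longrightarrow> A y = y \<Longrightarrow> y \<in> fixpts n A" unfolding fixpts_def by simp
  show ?thesis
  proof (cases "ffree n A i j")
    case True
    then have Pij: "PA n A (int i) = int j" using Pi unfolding adj_def j_def by simp
    then have ij: "i < j" using lt by simp
    have xn: "x = int (nat x)" "nat x \<in> {1..n}" using x Pij i j by auto
    define y0 where "y0 = nat x"
    have ly0: "lab n x = y0" using lab_int[OF xn(2)] xn(1) unfolding y0_def by simp
    have y0ij: "i < y0" "y0 < j" using x Pij xn unfolding y0_def by auto
    have ff: "{i..j} \<inter> fixpts n A = {}" using True ij unfolding ffree_def by simp
    have "A y0 \<noteq> y0"
    proof
      assume "A y0 = y0"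
      then have "y0 \<in> fixpts n A" using fixI xn(2) unfolding y0_def by simp
      then have "y0 \<in> {i..j} \<inter> fixpts n A" using y0ij by simp
      then show False using ff by simp
    qed
    then have xV: "x \<notin> VA n A" unfolding VA_def using ly0 by simp
    have "A y0 \<in> {i..j}" using ap ij y0ij by (auto simp: min_def max_def)
    moreover have "A y0 \<noteq> i" using inv_facts(2)[OF inv] xn(2) y0ij i unfolding y0_def j_def
      by (metis less_irrefl)
    moreover have "A y0 \<noteq> j" using inv_facts(2)[OF inv] xn(2) y0ij i unfolding y0_def j_def
      by (metis less_irrefl)
    ultimately have y: "i < A y0" "A y0 < j" by auto
    have "{min y0 (A y0)..max y0 (A y0)} \<subseteq> {i..j}" using y0ij y by auto
    then have "ffree n A y0 (A y0)" using ff unfolding ffree_def by blast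
    then have "PA n A x = int (A y0)" unfolding PA_def adj_def ly0 using xn(1) y0_def by simp
    then show ?thesis using xV y Pij by simp
  next
    case False
    have ij: "j < i"
    proof (rule ccontr)
      assume "\<not> j < i" then have "i < j" using Ai unfolding j_def by simp
      then show False using lt Pi False j unfolding adj_def j_def by simp
    qed
    have Pij: "PA n A (int i) = int j + int n" using Pi False ij unfolding adj_def j_def by simp
    have inv_ji: "A ` {j..i} = {j..i}" and fsub: "fixpts n A \<subseteq> {j..i}"
      using ap False ij by (auto simp: min_def max_def)
    have outside: "\<And>y. y \<in> {1..n} \<Longrightarrow> y \<notin> {j..i} \<Longrightarrow> A y \<notin> {j..i}"
    proof -
      fix y assume y: "y \<in> {1..n}" "y \<notin> {j..i}"
      show "A y \<notin> {j..i}"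
      proof
        assume "A y \<in> {j..i}"
        then have "A (A y) \<in> {j..i}" using inv_ji by blast
        then show False using inv_facts(2)[OF inv y(1)] y(2) by simp
      qed
    qed
    have notfix: "\<And>y. y \<in> {1..n} \<Longrightarrow> y \<notin> {j..i} \<Longrightarrow> A y \<noteq> y"
      using fsub fixI by blast
    have ffy: "\<And>a b. a \<in> {1..n} \<Longrightarrow> b \<in> {1..n} \<Longrightarrow> (i < a \<and> i < b) \<or> (a < j \<and> b < j) \<Longrightarrow> ffree n A a b"
      unfolding ffree_def using fsub by (auto simp: min_def max_def)
    obtain f where f: "f \<in> fixpts n A" using ne by auto
    have fji: "f \<in> {j..i}" using f fsub by auto
    have nffy: "\<And>a b. (i < a \<and> b < j) \<or> (a < j \<and> i < b) \<Longrightarrow> \<not> ffree n A a b"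
    proof -
      fix a b assume h: "(i < a \<and> b < j) \<or> (a < j \<and> i < b)"
      then have "f \<in> {min a b..max a b} \<inter> fixpts n A" using f fji by auto
      then show "\<not> ffree n A a b" unfolding ffree_def by blast
    qed
    consider "x \<le> int n" | "x > int n" by linarith
    then show ?thesis
    proof cases
      case 1
      have xn: "x = int (nat x)" "nat x \<in> {1..n}" using x 1 Pij i by auto
      define y0 where "y0 = nat x"
      have ly0: "lab n x = y0" using lab_int[OF xn(2)] xn(1) unfolding y0_def by simp
      have y0i: "i < y0" using x xn unfolding y0_def by simp
      have y0o: "y0 \<notin> {j..i}" using y0i by simp
      have xV: "x \<notin> VA n A" unfolding VA_def using ly0 notfix[OF xn(2)[folded y0_def] y0o] by simp
      have Ay: "A y0 \<in> {1..n}" "A y0 \<notin> {j..i}" using inv_facts(1)[OF inv] outside xn(2) y0o unfolding y0_def by auto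
      consider "i < A y0" | "A y0 < j" using Ay by auto
      then show ?thesis
      proof cases
        case 1
        then have "ffree n A y0 (A y0)" using ffy[of y0 "A y0"] xn(2) Ay y0i unfolding y0_def by simp
        then have "PA n A x = int (A y0)" unfolding PA_def adj_def ly0 using xn(1) y0_def by simp
        then show ?thesis using xV 1 Pij Ay j by auto
      next
        case 2
        then have "\<not> ffree n A y0 (A y0)" using nffy y0i by blast
        moreover have "A y0 < y0" using 2 y0i ij by simp
        ultimately have "PA n A x = int (A y0) + int n" unfolding PA_def adj_def ly0 using xn(1) y0_def by simp
        then show ?thesis using xV 2 Pij Ay i j by auto
      qed
    next
      case 2
      define y0 where "y0 = nat (x - int n)"
      have xn: "x = int y0 + int n" "y0 \<in> {1..n}" using x 2 Pij j unfolding y0_def by auto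
      have ly0: "lab n x = y0" using lab_shift1[OF n, of "int y0"] lab_int[OF xn(2)] xn(1) by simp
      have y0j: "y0 < j" using x xn Pij by simp
      have y0o: "y0 \<notin> {j..i}" using y0j by simp
      have xV: "x \<notin> VA n A" unfolding VA_def using ly0 notfix[OF xn(2) y0o] by simp
      have Ay: "A y0 \<in> {1..n}" "A y0 \<notin> {j..i}" using inv_facts(1)[OF inv] outside xn(2) y0o by auto
      consider "i < A y0" | "A y0 < j" using Ay by auto
      then show ?thesis
      proof cases
        case 1
        then have "\<not> ffree n A y0 (A y0)" using nffy y0j by blast
        moreover have "y0 < A y0" using 1 y0j ij by simp
        ultimately have "PA n A x = int (A y0)" unfolding PA_def adj_def ly0 using xn(1) by simp
        then show ?thesis using xV 1 Pij Ay j by auto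
      next
        case 2
        then have "ffree n A y0 (A y0)" using ffy[of y0 "A y0"] xn(2) Ay y0j by simp
        then have "PA n A x = int (A y0) + int n" unfolding PA_def adj_def ly0 using xn(1) by simp
        then show ?thesis using xV 2 Pij Ay i j by auto
      qed
    qed
  qed
qed



lemma arc_gen:
  assumes n: "n > 0" and A: "A \<in> Ann n" and ne: "fixpts n A \<noteq> {}"
    and k: "k \<notin> VA n A" and lt: "k < PA n A k" and x: "k < x" "x < PA n A k"
  shows "x \<notin> VA n A \<and> k < PA n A x \<and> PA n A x < PA n A k"
proof -
  define i where "i = lab n k"
  define q where "q = (k - 1) div int n"
  have kq: "k = int i + q * int n" unfolding i_def q_def by (rule lab_decomp[OF n])
  have i: "i \<in> {1..n}" unfolding i_def using lab_range[OF n] by simp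
  have Ai: "A i \<noteq> i" using k unfolding VA_def i_def by simp
  have Pk: "PA n A k = PA n A (int i) + q * int n" using kq PA_shift[OF n] by simp
  define x' where "x' = x - q * int n"
  have xx: "x = x' + q * int n" unfolding x'_def by simp
  have "int i < PA n A (int i)" using lt Pk kq by simp
  moreover have "int i < x'" "x' < PA n A (int i)" using x Pk kq unfolding x'_def by simp_all
  ultimately have b: "x' \<notin> VA n A \<and> int i < PA n A x' \<and> PA n A x' < PA n A (int i)"
    using arc_base[OF n A ne i Ai] by blast
  have "x \<notin> VA n A" using b perV_int[OF perV_VA[OF n], of x' q] xx by simp
  moreover have "PA n A x = PA n A x' + q * int n" using xx PA_shift[OF n] by simp
  ultimately show ?thesis using b Pk kq by simp
qed

lemma Ann_inv: "A \<in> Ann n \<Longrightarrow> A \<in> involutions n" unfolding Ann_def by simp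

lemma PA_row_ok:
  assumes n: "n > 0" and A: "A \<in> Ann n" and ne: "fixpts n A \<noteq> {}"
  shows "row_ok n (VA n A) (PA n A)"
proof -
  have inv: "A \<in> involutions n" using Ann_inv[OF A] .
  have p: "perV n (VA n A)" by (rule perV_VA[OF n])
  obtain f where f: "f \<in> fixpts n A" using ne by auto
  have "int f \<in> VA n A" using f lab_int[of f n] unfolding VA_def fixpts_def by simp
  then have VAne: "VA n A \<noteq> {}" by auto
  have props: "PA n A k \<notin> VA n A \<and> PA n A (PA n A k) = k \<and> PA n A k \<noteq> k \<and>
      PA n A (k + int n) = PA n A k + int n" if k: "k \<notin> VA n A" for k
  proof -
    define i where "i = lab n k"
    define j where "j = A i"
    have i: "i \<in> {1..n}" unfolding i_def using lab_range[OF n] by simp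
    have j: "j \<in> {1..n}" unfolding j_def using inv_facts(1)[OF inv i] .
    have ij: "i \<noteq> j" using k unfolding VA_def i_def j_def by simp
    have Aj: "A j = i" unfolding j_def using inv_facts(2)[OF inv i] .
    have lP: "lab n (PA n A k) = j" unfolding j_def i_def by (rule lab_PA[OF n inv])
    have PV: "PA n A k \<notin> VA n A" unfolding VA_def using lP Aj ij by simp
    have Pk: "PA n A k = k - int i + int j + adj n A i" unfolding PA_def i_def j_def by simp
    have PPk: "PA n A (PA n A k) = PA n A k - int j + int i + adj n A j"
      by (simp only: PA_def[of n A "PA n A k"] lP Aj)
    have ffs: "ffree n A j i = ffree n A i j" unfolding ffree_def by (simp add: min.commute max.commute)
    have "adj n A i + adj n A j = 0" unfolding adj_def using ffs ij Aj j_def by auto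
    then have "PA n A (PA n A k) = k" using Pk PPk by simp
    moreover have "PA n A k \<noteq> k" using lP ij i_def by auto
    moreover have "PA n A (k + int n) = PA n A k + int n" using PA_shift[OF n, of A k 1] by simp
    ultimately show ?thesis using PV by simp
  qed
  have btw: "\<not> (k < v \<and> v < PA n A k) \<and> \<not> (PA n A k < v \<and> v < k)"
    if k: "k \<notin> VA n A" and v: "v \<in> VA n A" for k v
  proof -
    have "\<not> (k < v \<and> v < PA n A k)" using arc_gen[OF n A ne k] v by auto
    moreover have "\<not> (PA n A k < v \<and> v < k)"
      using arc_gen[OF n A ne, of "PA n A k"] props[OF k] v by auto
    ultimately show ?thesis by simp
  qed
  have nc: "\<not> (k < l \<and> l < PA n A k \<and> PA n A k < PA n A l)"
    if k: "k \<notin> VA n A" and l: "l \<notin> VA n A" for k l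
    using arc_gen[OF n A ne k, of l] by auto
  show ?thesis unfolding row_ok_def using p VAne props btw nc by blast
qed

lemma rowS_PA:
  assumes n: "n > 0" and A: "A \<in> Ann n"
  shows "rowS n (VA n A) (PA n A) = A"
proof
  fix i
  have inv: "A \<in> involutions n" using Ann_inv[OF A] .
  show "rowS n (VA n A) (PA n A) i = A i"
  proof (cases "i \<in> {1..n}")
    case True
    have li: "lab n (int i) = i" using lab_int[OF True] .
    show ?thesis
    proof (cases "A i = i")
      case True then show ?thesis unfolding rowS_def VA_def using li by simp
    next
      case False then show ?thesis unfolding rowS_def VA_def using li lab_PA[OF n inv, of "int i"] True by simp
    qed
  next
    case False then show ?thesis unfolding rowS_def using inv_facts(3)[OF inv False] by auto
  qed
qed



definition Vr :: "bool \<Rightarrow> (node \<Rightarrow> node) \<Rightarrow> int set" where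
  "Vr b m = {k. snd (m (k, b)) \<noteq> b}"

definition Pr :: "bool \<Rightarrow> (node \<Rightarrow> node) \<Rightarrow> int \<Rightarrow> int" where
  "Pr b m k = fst (m (k, b))"

lemma S1_rowS: "S1 n m = rowS n (Vr True m) (Pr True m)"
  unfolding S1_def row_inv_def rowS_def Vr_def Pr_def by auto

lemma S2_rowS: "S2 n m = rowS n (Vr False m) (Pr False m)"
  unfolding S2_def row_inv_def rowS_def Vr_def Pr_def by auto

lemma diagD:
  assumes "m \<in> diagrams_vert n"
  shows "\<And>x. m (m x) = x" "\<And>x. m x \<noteq> x"
    "\<And>k b. m (k + int n, b) = (fst (m (k, b)) + int n, snd (m (k, b)))"
    "\<And>a c. bnd_less a c \<Longrightarrow> bnd_less c (m a) \<Longrightarrow> bnd_less (m a) (m c) \<Longrightarrow> False"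
    "\<exists>x. snd (m x) \<noteq> snd x"
  using assms unfolding diagrams_vert_def is_affine_diagram_matching_def has_vertical_edge_def by blast+

lemma m_row:
  assumes "k \<notin> Vr b m" shows "m (k, b) = (Pr b m k, b)"
  using assms unfolding Vr_def Pr_def by (cases "m (k, b)") auto

lemma m_vert:
  assumes "k \<in> Vr b m" shows "m (k, b) = (Pr b m k, \<not> b)"
  using assms unfolding Vr_def Pr_def by (cases "m (k, b)") auto

lemma diag_row_ok:
  assumes D: "m \<in> diagrams_vert n"
  shows "row_ok n (Vr b m) (Pr b m)"
proof -
  let ?V = "Vr b m" and ?P = "Pr b m"
  note d = diagD[OF D]
  have p: "perV n ?V" unfolding perV_def Vr_def using d(3) by simp
  have ne: "?V \<noteq> {}"
  proof -
    obtain k b0 where x: "snd (m (k, b0)) \<noteq> b0" using d(5) by auto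
    show ?thesis
    proof (cases "b0 = b")
      case True then have "k \<in> ?V" unfolding Vr_def using x by simp
      then show ?thesis by auto
    next
      case False
      have "m (m (k, b0)) = (k, b0)" using d(1) .
      moreover have "m (k, b0) = (fst (m (k, b0)), b)" using x False by (cases "m (k, b0)") auto
      ultimately have "m (fst (m (k, b0)), b) = (k, b0)" by metis
      then have "fst (m (k, b0)) \<in> ?V" unfolding Vr_def using False by simp
      then show ?thesis by auto
    qed
  qed
  have props: "?P k \<notin> ?V \<and> ?P (?P k) = k \<and> ?P k \<noteq> k \<and> ?P (k + int n) = ?P k + int n"
    if k: "k \<notin> ?V" for k
  proof -
    have mk: "m (k, b) = (?P k, b)" using m_row[OF k] .
    have mm: "m (?P k, b) = (k, b)" using d(1)[of "(k, b)"] mk by simp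
    show ?thesis using mm mk d(2)[of "(k,b)"] d(3)[of k b] unfolding Vr_def Pr_def by auto
  qed
  have btw: "\<not> (k < v \<and> v < ?P k) \<and> \<not> (?P k < v \<and> v < k)"
    if k: "k \<notin> ?V" and v: "v \<in> ?V" for k v
  proof -
    have mk: "m (k, b) = (?P k, b)" using m_row[OF k] .
    have mm: "m (?P k, b) = (k, b)" using d(1)[of "(k, b)"] mk by simp
    have mv: "m (v, b) = (?P v, \<not> b)" using m_vert[OF v] .
    have mv': "m (?P v, \<not> b) = (v, b)" using d(1)[of "(v, b)"] mv by simp
    show ?thesis
    proof (cases b)
      case True
      show ?thesis
      proof (intro conjI notI)
        assume h: "k < v \<and> v < ?P k"
        show False using d(4)[of "(?P v, False)" "(?P k, True)"] mv' mk mm True h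
          unfolding bnd_less_def by simp
      next
        assume h: "?P k < v \<and> v < k"
        show False using d(4)[of "(?P v, False)" "(k, True)"] mv' mk mm True h
          unfolding bnd_less_def by simp
      qed
    next
      case False
      show ?thesis
      proof (intro conjI notI)
        assume h: "k < v \<and> v < ?P k"
        show False using d(4)[of "(k, False)" "(v, False)"] mv mk False h
          unfolding bnd_less_def by simp
      next
        assume h: "?P k < v \<and> v < k"
        show False using d(4)[of "(?P k, False)" "(v, False)"] mv mm False h
          unfolding bnd_less_def by simp
      qed
    qed
  qed
  have nc: "\<not> (k < l \<and> l < ?P k \<and> ?P k < ?P l)"
    if k: "k \<notin> ?V" and l: "l \<notin> ?V" for k l
  proof
    assume h: "k < l \<and> l < ?P k \<and> ?P k < ?P l"
    have mk: "m (k, b) = (?P k, b)" using m_row[OF k] .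
    have mm: "m (?P k, b) = (k, b)" using d(1)[of "(k, b)"] mk by simp
    have ml: "m (l, b) = (?P l, b)" using m_row[OF l] .
    have mml: "m (?P l, b) = (l, b)" using d(1)[of "(l, b)"] ml by simp
    show False
    proof (cases b)
      case True
      show False using d(4)[of "(?P l, True)" "(?P k, True)"] mm mml True h
        unfolding bnd_less_def by simp
    next
      case False
      show False using d(4)[of "(k, False)" "(l, False)"] mk ml False h
        unfolding bnd_less_def by simp
    qed
  qed
  show ?thesis unfolding row_ok_def using p ne props btw nc by blast
qed

lemma vert_facts:
  assumes D: "m \<in> diagrams_vert n" and k: "k \<in> Vr True m"
  shows "Pr True m k \<in> Vr False m" "Pr False m (Pr True m k) = k"
proof -
  have mk: "m (k, True) = (Pr True m k, False)" using m_vert[OF k] by simp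
  have "m (Pr True m k, False) = (k, True)" using diagD(1)[OF D, of "(k, True)"] mk by simp
  then show "Pr True m k \<in> Vr False m" "Pr False m (Pr True m k) = k" unfolding Vr_def Pr_def by simp_all
qed

lemma vert_facts2:
  assumes D: "m \<in> diagrams_vert n" and u: "u \<in> Vr False m"
  shows "Pr False m u \<in> Vr True m" "Pr True m (Pr False m u) = u"
proof -
  have mk: "m (u, False) = (Pr False m u, True)" using m_vert[OF u] by simp
  have "m (Pr False m u, True) = (u, False)" using diagD(1)[OF D, of "(u, False)"] mk by simp
  then show "Pr False m u \<in> Vr True m" "Pr True m (Pr False m u) = u" unfolding Vr_def Pr_def by simp_all
qed

lemma vert_mono:
  assumes D: "m \<in> diagrams_vert n" and k: "k \<in> Vr True m" and k': "k' \<in> Vr True m" and lt: "k < k'"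
  shows "Pr True m k < Pr True m k'"
proof (rule ccontr)
  assume "\<not> Pr True m k < Pr True m k'"
  moreover have "Pr True m k \<noteq> Pr True m k'"
  proof
    assume e: "Pr True m k = Pr True m k'"
    have "k = Pr False m (Pr True m k)" using vert_facts(2)[OF D k] by simp
    also have "\<dots> = k'" using e vert_facts(2)[OF D k'] by simp
    finally show False using lt by simp
  qed
  ultimately have h: "Pr True m k' < Pr True m k" by simp
  have mk: "m (k, True) = (Pr True m k, False)" using m_vert[OF k] by simp
  have mk': "m (k', True) = (Pr True m k', False)" using m_vert[OF k'] by simp
  have a: "m (Pr True m k', False) = (k', True)" using diagD(1)[OF D, of "(k', True)"] mk' by simp
  have c: "m (Pr True m k, False) = (k, True)" using diagD(1)[OF D, of "(k, True)"] mk by simp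
  show False using diagD(4)[OF D, of "(Pr True m k', False)" "(Pr True m k, False)"] a c h lt
    unfolding bnd_less_def by simp
qed

lemma vert_per:
  assumes D: "m \<in> diagrams_vert n" and k: "k \<in> Vr True m"
  shows "Pr True m (k + int n) = Pr True m k + int n"
  using diagD(3)[OF D, of k True] unfolding Pr_def by simp



lemma iso_cnt:
  assumes gV: "\<forall>v\<in>VT. g v \<in> VB" and mono: "\<forall>u\<in>VT. \<forall>v\<in>VT. u < v \<longrightarrow> g u < g v"
    and surj: "\<forall>y\<in>VB. \<exists>x\<in>VT. g x = y" and u: "u \<in> VT" and v: "v \<in> VT" and uv: "u < v"
  shows "cnt VB (g v) - cnt VB (g u) = cnt VT v - cnt VT u"
proof -
  have img: "g ` (VT \<inter> {u<..v}) = VB \<inter> {g u<..g v}"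
  proof
    show "g ` (VT \<inter> {u<..v}) \<subseteq> VB \<inter> {g u<..g v}"
    proof
      fix y assume "y \<in> g ` (VT \<inter> {u<..v})"
      then obtain x where x: "x \<in> VT" "u < x" "x \<le> v" "y = g x" by auto
      have "g x \<le> g v" using mono x v by (cases "x = v") (auto simp: less_imp_le)
      then show "y \<in> VB \<inter> {g u<..g v}" using x gV mono u by auto
    qed
  next
    show "VB \<inter> {g u<..g v} \<subseteq> g ` (VT \<inter> {u<..v})"
    proof
      fix y assume y: "y \<in> VB \<inter> {g u<..g v}"
      then obtain x where x: "x \<in> VT" "g x = y" using surj by auto
      have "u < x"
      proof (rule ccontr)
        assume "\<not> u < x" then have "x \<le> u" by simp
        then have "g x \<le> g u" using mono x u by (cases "x = u") (auto simp: less_imp_le)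
        then show False using x y by simp
      qed
      moreover have "x \<le> v"
      proof (rule ccontr)
        assume "\<not> x \<le> v" then have "v < x" by simp
        then have "g v < g x" using mono x v by blast
        then show False using x y by simp
      qed
      ultimately show "y \<in> g ` (VT \<inter> {u<..v})" using x by auto
    qed
  qed
  have inj: "inj_on g (VT \<inter> {u<..v})"
  proof (rule inj_onI)
    fix a b assume "a \<in> VT \<inter> {u<..v}" "b \<in> VT \<inter> {u<..v}" "g a = g b"
    then show "a = b" using mono by (metis IntD1 less_irrefl linorder_neqE_linordered_idom)
  qed
  have "card (VB \<inter> {g u<..g v}) = card (VT \<inter> {u<..v})" using card_image[OF inj] img by simp
  moreover have "g u < g v" using mono u v uv by simp
  ultimately show ?thesis using cnt_diff[of u v VT] cnt_diff[of "g u" "g v" VB] uv by simp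
qed

lemma iso_const:
  assumes gV: "\<forall>v\<in>VT. g v \<in> VB" and mono: "\<forall>u\<in>VT. \<forall>v\<in>VT. u < v \<longrightarrow> g u < g v"
    and surj: "\<forall>y\<in>VB. \<exists>x\<in>VT. g x = y" and u: "u \<in> VT" and v: "v \<in> VT"
  shows "cnt VB (g v) - cnt VT v = cnt VB (g u) - cnt VT u"
proof -
  consider "u < v" | "u = v" | "v < u" by linarith
  then show ?thesis
  proof cases
    case 1 then show ?thesis using iso_cnt[OF gV mono surj u v] by simp
  next
    case 2 then show ?thesis by simp
  next
    case 3 then show ?thesis using iso_cnt[OF gV mono surj v u] by simp
  qed
qed

lemma card_cnt_range:
  assumes surjT: "\<forall>e. \<exists>v\<in>VT. cnt VT v = e"
  shows "card {v \<in> VT. lo \<le> cnt VT v \<and> cnt VT v \<le> hi} = nat (hi - lo + 1)"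
proof -
  have "bij_betw (cnt VT) {v \<in> VT. lo \<le> cnt VT v \<and> cnt VT v \<le> hi} {lo..hi}"
  proof (rule bij_betwI')
    fix x y assume "x \<in> {v \<in> VT. lo \<le> cnt VT v \<and> cnt VT v \<le> hi}" "y \<in> {v \<in> VT. lo \<le> cnt VT v \<and> cnt VT v \<le> hi}"
    then show "(cnt VT x = cnt VT y) = (x = y)" using cnt_inj[of x VT y] by auto
  next
    fix x assume "x \<in> {v \<in> VT. lo \<le> cnt VT v \<and> cnt VT v \<le> hi}"
    then show "cnt VT x \<in> {lo..hi}" by simp
  next
    fix e assume e: "e \<in> {lo..hi}"
    from surjT obtain v where v: "v \<in> VT" "cnt VT v = e" by blast
    then show "\<exists>x\<in>{v \<in> VT. lo \<le> cnt VT v \<and> cnt VT v \<le> hi}. e = cnt VT x" using e by force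
  qed
  then show ?thesis using bij_betw_same_card by fastforce
qed

lemma wind_abs:
  assumes surjT: "\<forall>e. \<exists>v\<in>VT. cnt VT v = e" and gV: "\<forall>v\<in>VT. g v \<in> VB"
    and rel: "\<forall>v\<in>VT. cnt VB (g v) = cnt VT v - c"
  shows "int (card {v \<in> VT. 1 \<le> v \<and> g v \<le> 0}) - int (card {v \<in> VT. v \<le> 0 \<and> 1 \<le> g v}) = c"
proof -
  have e1: "{v \<in> VT. 1 \<le> v \<and> g v \<le> 0} = {v \<in> VT. 1 \<le> cnt VT v \<and> cnt VT v \<le> c}"
  proof (rule Collect_cong)
    fix v show "(v \<in> VT \<and> 1 \<le> v \<and> g v \<le> 0) = (v \<in> VT \<and> 1 \<le> cnt VT v \<and> cnt VT v \<le> c)"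
    proof (cases "v \<in> VT")
      case True
      have "(1 \<le> v) = (1 \<le> cnt VT v)" using cnt_pos[OF True] by simp
      moreover have "(g v \<le> 0) = (cnt VT v \<le> c)"
        using cnt_pos[of "g v" VB] gV rel True by force
      ultimately show ?thesis using True by simp
    qed simp
  qed
  have e2: "{v \<in> VT. v \<le> 0 \<and> 1 \<le> g v} = {v \<in> VT. c + 1 \<le> cnt VT v \<and> cnt VT v \<le> 0}"
  proof (rule Collect_cong)
    fix v show "(v \<in> VT \<and> v \<le> 0 \<and> 1 \<le> g v) = (v \<in> VT \<and> c + 1 \<le> cnt VT v \<and> cnt VT v \<le> 0)"
    proof (cases "v \<in> VT")
      case True
      have "(v \<le> 0) = (cnt VT v \<le> 0)" using cnt_pos[OF True] by linarith
      moreover have "(1 \<le> g v) = (c + 1 \<le> cnt VT v)"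
        using cnt_pos[of "g v" VB] gV rel True by force
      ultimately show ?thesis using True by auto
    qed simp
  qed
  show ?thesis unfolding e1 e2 card_cnt_range[OF surjT] by simp
qed

lemma w1_eq:
  assumes D: "m \<in> diagrams_vert n"
  shows "w1 m = card {v \<in> Vr True m. 1 \<le> v \<and> Pr True m v \<le> 0}"
proof -
  let ?Pairs = "{(i, j). m (j, False) = (i, True) \<and> i > j \<and> j \<le> 0 \<and> 1 \<le> i}"
  let ?X = "{v \<in> Vr True m. 1 \<le> v \<and> Pr True m v \<le> 0}"
  have pr: "m (i, True) = (j, False)" if "m (j, False) = (i, True)" for i j
    using diagD(1)[OF D, of "(j, False)"] that by simp
  have img: "fst ` ?Pairs = ?X"
  proof
    show "fst ` ?Pairs \<subseteq> ?X"
    proof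
      fix i assume "i \<in> fst ` ?Pairs"
      then obtain p where p: "p \<in> ?Pairs" "i = fst p" by blast
      obtain j where "p = (i, j)" using p(2) by (cases p) auto
      then have "(i, j) \<in> ?Pairs" using p(1) by simp
      then have "m (i, True) = (j, False)" "j \<le> 0" "1 \<le> i" using pr by auto
      then show "i \<in> ?X" unfolding Vr_def Pr_def by simp
    qed
  next
    show "?X \<subseteq> fst ` ?Pairs"
    proof
      fix i assume i: "i \<in> ?X"
      then have mi: "m (i, True) = (Pr True m i, False)" using m_vert[of i True m] by simp
      have "m (Pr True m i, False) = (i, True)" using diagD(1)[OF D, of "(i, True)"] mi by simp
      then have "(i, Pr True m i) \<in> ?Pairs" using i by auto
      then show "i \<in> fst ` ?Pairs" by force
    qed
  qed
  have inj: "inj_on fst ?Pairs"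
  proof (rule inj_onI)
    fix x y assume x: "x \<in> ?Pairs" and y: "y \<in> ?Pairs" and e: "fst x = fst y"
    obtain i j where xij: "x = (i, j)" by force
    obtain i' j' where yij: "y = (i', j')" by force
    have "m (i, True) = (j, False)" using x xij pr by auto
    moreover have "m (i', True) = (j', False)" using y yij pr by auto
    ultimately show "x = y" using e xij yij by simp
  qed
  show ?thesis unfolding w1_def using card_image[OF inj] img by simp
qed

lemma w2_eq:
  assumes D: "m \<in> diagrams_vert n"
  shows "w2 m = card {v \<in> Vr True m. v \<le> 0 \<and> 1 \<le> Pr True m v}"
proof -
  let ?Pairs = "{(i, j). m (j, False) = (i, True) \<and> i < j \<and> i \<le> 0 \<and> 1 \<le> j}"
  let ?X = "{v \<in> Vr True m. v \<le> 0 \<and> 1 \<le> Pr True m v}"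
  have pr: "m (i, True) = (j, False)" if "m (j, False) = (i, True)" for i j
    using diagD(1)[OF D, of "(j, False)"] that by simp
  have img: "fst ` ?Pairs = ?X"
  proof
    show "fst ` ?Pairs \<subseteq> ?X"
    proof
      fix i assume "i \<in> fst ` ?Pairs"
      then obtain p where p: "p \<in> ?Pairs" "i = fst p" by blast
      obtain j where "p = (i, j)" using p(2) by (cases p) auto
      then have "(i, j) \<in> ?Pairs" using p(1) by simp
      then have "m (i, True) = (j, False)" "i \<le> 0" "1 \<le> j" using pr by auto
      then show "i \<in> ?X" unfolding Vr_def Pr_def by simp
    qed
  next
    show "?X \<subseteq> fst ` ?Pairs"
    proof
      fix i assume i: "i \<in> ?X"
      then have mi: "m (i, True) = (Pr True m i, False)" using m_vert[of i True m] by simp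
      have "m (Pr True m i, False) = (i, True)" using diagD(1)[OF D, of "(i, True)"] mi by simp
      then have "(i, Pr True m i) \<in> ?Pairs" using i by auto
      then show "i \<in> fst ` ?Pairs" by force
    qed
  qed
  have inj: "inj_on fst ?Pairs"
  proof (rule inj_onI)
    fix x y assume x: "x \<in> ?Pairs" and y: "y \<in> ?Pairs" and e: "fst x = fst y"
    obtain i j where xij: "x = (i, j)" by force
    obtain i' j' where yij: "y = (i', j')" by force
    have "m (i, True) = (j, False)" using x xij pr by auto
    moreover have "m (i', True) = (j', False)" using y yij pr by auto
    ultimately show "x = y" using e xij yij by simp
  qed
  show ?thesis unfolding w2_def using card_image[OF inj] img by simp
qed

lemma wind_diag:
  assumes D: "m \<in> diagrams_vert n"
    and surjT: "\<forall>e. \<exists>v\<in>Vr True m. cnt (Vr True m) v = e"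
    and rel: "\<forall>v\<in>Vr True m. cnt (Vr False m) (Pr True m v) = cnt (Vr True m) v - c"
  shows "wind m = c"
  unfolding wind_def w1_eq[OF D] w2_eq[OF D]
  using wind_abs[OF surjT _ rel] vert_facts(1)[OF D] by blast



definition gT :: "nat \<Rightarrow> (nat \<Rightarrow> nat) \<Rightarrow> (nat \<Rightarrow> nat) \<Rightarrow> int \<Rightarrow> int \<Rightarrow> int" where
  "gT n A B w k = (THE u. u \<in> VA n B \<and> cnt (VA n B) u = cnt (VA n A) k - w)"

definition gB :: "nat \<Rightarrow> (nat \<Rightarrow> nat) \<Rightarrow> (nat \<Rightarrow> nat) \<Rightarrow> int \<Rightarrow> int \<Rightarrow> int" where
  "gB n A B w u = (THE v. v \<in> VA n A \<and> cnt (VA n A) v = cnt (VA n B) u + w)"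

definition build :: "nat \<Rightarrow> (nat \<Rightarrow> nat) \<Rightarrow> (nat \<Rightarrow> nat) \<Rightarrow> int \<Rightarrow> node \<Rightarrow> node" where
  "build n A B w = (\<lambda>(k, b). if b then (if k \<in> VA n A then (gT n A B w k, False) else (PA n A k, True))
      else (if k \<in> VA n B then (gB n A B w k, True) else (PA n B k, False)))"

lemma card_nat_int: "card {i \<in> {1..n}. int i \<in> V} = card (V \<inter> {1..int n})"
proof -
  have "int ` {i \<in> {1..n}. int i \<in> V} = V \<inter> {1..int n}"
  proof
    show "V \<inter> {1..int n} \<subseteq> int ` {i \<in> {1..n}. int i \<in> V}"
    proof
      fix x assume x: "x \<in> V \<inter> {1..int n}"
      then have xe: "x = int (nat x)" by simp
      have "nat x \<in> {i \<in> {1..n}. int i \<in> V}" using x by auto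
      then have "int (nat x) \<in> int ` {i \<in> {1..n}. int i \<in> V}" by (rule imageI)
      then show "x \<in> int ` {i \<in> {1..n}. int i \<in> V}" using xe by simp
    qed
  qed auto
  moreover have inj: "inj_on int {i \<in> {1..n}. int i \<in> V}" by (simp add: inj_on_def)
  ultimately show ?thesis using card_image[OF inj] by simp
qed

lemma t_pos:
  assumes n: "n > 0" and p: "perV n V" and ne: "V \<noteq> {}"
  shows "card (V \<inter> {1..int n}) > 0"
proof -
  obtain v where v: "v \<in> V" "1 \<le> v" "v < 1 + int n" using window_V[OF n p ne, of 1] by auto
  then have "v \<in> V \<inter> {1..int n}" by simp
  then have "V \<inter> {1..int n} \<noteq> {}" by blast
  moreover have "finite (V \<inter> {1..int n})" by simp
  ultimately show ?thesis by (simp add: card_gt_0_iff)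
qed

lemma VA_rowS:
  assumes n: "n > 0" and r: "row_ok n V P"
  shows "VA n (rowS n V P) = V"
proof -
  have "k \<in> VA n (rowS n V P) \<longleftrightarrow> k \<in> V" for k
  proof -
    have l: "lab n k \<in> {1..n}" using lab_range[OF n] by simp
    have "k \<in> VA n (rowS n V P) \<longleftrightarrow> int (lab n k) \<in> V"
      unfolding VA_def using rowS_fix[OF n r l] by simp
    also have "\<dots> \<longleftrightarrow> k \<in> V" using perV_lab[OF n row_okD(1)[OF r]] by simp
    finally show ?thesis .
  qed
  then show ?thesis by auto
qed

lemma PA_rowS:
  assumes n: "n > 0" and r: "row_ok n V P" and k: "k \<notin> V"
  shows "PA n (rowS n V P) k = P k"
proof -
  let ?S = "rowS n V P"
  have ann: "?S \<in> Ann n" by (rule rowS_Ann[OF n r])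
  have fne: "fixpts n ?S \<noteq> {}"
  proof -
    have "card (fixpts n ?S) > 0" using fixpts_rowS[OF n r] card_nat_int t_pos[OF n row_okD(1,2)[OF r]] by simp
    then show ?thesis by auto
  qed
  have r2: "row_ok n V (PA n ?S)" using PA_row_ok[OF n ann fne] VA_rowS[OF n r] by simp
  have "lab n (PA n ?S k) = lab n (P k)"
    using lab_PA[OF n Ann_inv[OF ann]] lab_P_rowS[OF n r k] by simp
  then show ?thesis using row_unique[OF n r2 r k] by simp
qed

lemma the_cnt:
  assumes "u \<in> V" "cnt V u = e"
  shows "(THE x. x \<in> V \<and> cnt V x = e) = u"
proof (rule the_equality)
  show "u \<in> V \<and> cnt V u = e" using assms by simp
next
  fix x assume "x \<in> V \<and> cnt V x = e"
  then show "x = u" using cnt_inj[of x V u] assms by simp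
qed

lemma diag_main:
  assumes n: "n > 0" and D: "m \<in> diagrams_vert n"
  shows "\<exists>t>0. S1 n m \<in> Ann n \<inter> Inv_t n t \<and> S2 n m \<in> Ann n \<inter> Inv_t n t"
    "build n (S1 n m) (S2 n m) (wind m) = m"
proof -
  let ?VT = "Vr True m" and ?VB = "Vr False m" and ?PT = "Pr True m" and ?PB = "Pr False m"
  have rT: "row_ok n ?VT ?PT" by (rule diag_row_ok[OF D])
  have rB: "row_ok n ?VB ?PB" by (rule diag_row_ok[OF D])
  have pT: "perV n ?VT" and pB: "perV n ?VB" using row_okD(1) rT rB by auto
  have tT: "card (?VT \<inter> {1..int n}) > 0" using t_pos[OF n row_okD(1,2)[OF rT]] .
  have tB: "card (?VB \<inter> {1..int n}) > 0" using t_pos[OF n row_okD(1,2)[OF rB]] .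
  have gV: "\<forall>v\<in>?VT. ?PT v \<in> ?VB" using vert_facts(1)[OF D] by blast
  have mono: "\<forall>u\<in>?VT. \<forall>v\<in>?VT. u < v \<longrightarrow> ?PT u < ?PT v" using vert_mono[OF D] by blast
  have surj: "\<forall>y\<in>?VB. \<exists>x\<in>?VT. ?PT x = y"
  proof
    fix y assume y: "y \<in> ?VB"
    show "\<exists>x\<in>?VT. ?PT x = y" using vert_facts2[OF D y] by blast
  qed
  obtain v0 where v0: "v0 \<in> ?VT" using row_okD(2)[OF rT] by auto
  define c0 where "c0 = cnt ?VB (?PT v0) - cnt ?VT v0"
  have rel0: "\<forall>v\<in>?VT. cnt ?VB (?PT v) = cnt ?VT v + c0"
    using iso_const[OF gV mono surj v0] unfolding c0_def by force
  have surjT: "\<forall>e. \<exists>v\<in>?VT. cnt ?VT v = e" using cnt_surj[OF n pT tT] by blast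
  have "wind m = - c0" using wind_diag[OF D surjT] rel0 by simp
  then have rel: "\<forall>v\<in>?VT. cnt ?VB (?PT v) = cnt ?VT v - wind m" using rel0 by simp
  have teq: "card (?VT \<inter> {1..int n}) = card (?VB \<inter> {1..int n})"
  proof -
    have v1: "v0 + int n \<in> ?VT" using pT v0 unfolding perV_def by simp
    have "cnt ?VB (?PT (v0 + int n)) = cnt ?VT (v0 + int n) - wind m" using rel v1 by blast
    moreover have "?PT (v0 + int n) = ?PT v0 + int n" by (rule vert_per[OF D v0])
    ultimately have "cnt ?VB (?PT v0) + int (card (?VB \<inter> {1..int n})) =
                     cnt ?VT v0 + int (card (?VT \<inter> {1..int n})) - wind m"
      using cnt_period[OF n pB] cnt_period[OF n pT] by simp
    then show ?thesis using rel v0 by simp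
  qed
  define t where "t = card (?VT \<inter> {1..int n})"
  have S1: "S1 n m \<in> Ann n \<inter> Inv_t n t"
    using rowS_Ann[OF n rT] rowS_Inv_t[OF n rT] card_nat_int unfolding S1_rowS t_def by simp
  have S2: "S2 n m \<in> Ann n \<inter> Inv_t n t"
    using rowS_Ann[OF n rB] rowS_Inv_t[OF n rB] card_nat_int teq unfolding S2_rowS t_def by simp
  show "\<exists>t>0. S1 n m \<in> Ann n \<inter> Inv_t n t \<and> S2 n m \<in> Ann n \<inter> Inv_t n t"
    using S1 S2 tT unfolding t_def by blast
  have VA1: "VA n (S1 n m) = ?VT" unfolding S1_rowS by (rule VA_rowS[OF n rT])
  have VA2: "VA n (S2 n m) = ?VB" unfolding S2_rowS by (rule VA_rowS[OF n rB])
  show "build n (S1 n m) (S2 n m) (wind m) = m"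
  proof
    fix x :: node
    obtain k b where x: "x = (k, b)" by force
    show "build n (S1 n m) (S2 n m) (wind m) x = m x"
    proof (cases b)
      case True
      show ?thesis
      proof (cases "k \<in> ?VT")
        case kV: True
        have "gT n (S1 n m) (S2 n m) (wind m) k = ?PT k"
          unfolding gT_def VA1 VA2 using the_cnt[of "?PT k" ?VB] gV rel kV by simp
        then show ?thesis unfolding build_def x using True kV VA1 m_vert[OF kV] by simp
      next
        case kV: False
        have "PA n (S1 n m) k = ?PT k" unfolding S1_rowS by (rule PA_rowS[OF n rT kV])
        then show ?thesis unfolding build_def x using True kV VA1 m_row[OF kV] by simp
      qed
    next
      case False
      show ?thesis
      proof (cases "k \<in> ?VB")
        case kV: True
        have h: "?PB k \<in> ?VT" "?PT (?PB k) = k" using vert_facts2[OF D kV] by simp_all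
        have "cnt ?VB (?PT (?PB k)) = cnt ?VT (?PB k) - wind m" using rel h(1) by blast
        then have "cnt ?VB k = cnt ?VT (?PB k) - wind m" using h(2) by simp
        then have "gB n (S1 n m) (S2 n m) (wind m) k = ?PB k"
          unfolding gB_def VA1 VA2 using the_cnt[of "?PB k" ?VT] h by simp
        then show ?thesis unfolding build_def x using False kV VA2 m_vert[OF kV] by simp
      next
        case kV: False
        have "PA n (S2 n m) k = ?PB k" unfolding S2_rowS by (rule PA_rowS[OF n rB kV])
        then show ?thesis unfolding build_def x using False kV VA2 m_row[OF kV] by simp
      qed
    qed
  qed
qed



lemma rowS_cong: "(\<And>k. k \<notin> V \<Longrightarrow> P k = P' k) \<Longrightarrow> rowS n V P = rowS n V P'"
  unfolding rowS_def by (intro ext) auto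

lemma card_VA:
  assumes A: "A \<in> Inv_t n t"
  shows "card (VA n A \<inter> {1..int n}) = t"
proof -
  have "{i \<in> {1..n}. int i \<in> VA n A} = fixpts n A"
    unfolding VA_def fixpts_def using lab_int by auto
  then show ?thesis using card_nat_int[of n "VA n A"] A unfolding Inv_t_def by simp
qed

lemma build_main:
  assumes n: "n > 0" and t: "t > 0" and A: "A \<in> Ann n \<inter> Inv_t n t" and B: "B \<in> Ann n \<inter> Inv_t n t"
  shows "build n A B w \<in> diagrams_vert n \<and> S1 n (build n A B w) = A \<and> S2 n (build n A B w) = B
         \<and> wind (build n A B w) = w"
proof -
  let ?VT = "VA n A" and ?VB = "VA n B" and ?M = "build n A B w"
  let ?gT = "gT n A B w" and ?gB = "gB n A B w"
  have AA: "A \<in> Ann n" and BA: "B \<in> Ann n" using A B by auto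
  have cA: "card (?VT \<inter> {1..int n}) = t" using card_VA A by auto
  have cB: "card (?VB \<inter> {1..int n}) = t" using card_VA B by auto
  have fA: "fixpts n A \<noteq> {}" using A t unfolding Inv_t_def by auto
  have fB: "fixpts n B \<noteq> {}" using B t unfolding Inv_t_def by auto
  have rA: "row_ok n ?VT (PA n A)" by (rule PA_row_ok[OF n AA fA])
  have rB: "row_ok n ?VB (PA n B)" by (rule PA_row_ok[OF n BA fB])
  have pA: "perV n ?VT" and pB: "perV n ?VB" using perV_VA[OF n] by auto
  have sA: "\<And>e. \<exists>v\<in>?VT. cnt ?VT v = e" using cnt_surj[OF n pA] cA t by simp
  have sB: "\<And>e. \<exists>v\<in>?VB. cnt ?VB v = e" using cnt_surj[OF n pB] cB t by simp
  have gT: "?gT k \<in> ?VB \<and> cnt ?VB (?gT k) = cnt ?VT k - w" for k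
  proof -
    obtain u where u: "u \<in> ?VB" "cnt ?VB u = cnt ?VT k - w" using sB by blast
    have "?gT k = u" unfolding gT_def by (rule the_cnt[OF u])
    then show ?thesis using u by simp
  qed
  have gB: "?gB u \<in> ?VT \<and> cnt ?VT (?gB u) = cnt ?VB u + w" for u
  proof -
    obtain v where v: "v \<in> ?VT" "cnt ?VT v = cnt ?VB u + w" using sA by blast
    have "?gB u = v" unfolding gB_def by (rule the_cnt[OF v])
    then show ?thesis using v by simp
  qed
  have gBT: "?gB (?gT k) = k" if "k \<in> ?VT" for k
    unfolding gB_def using the_cnt[of k ?VT] that gT[of k] by simp
  have gTB: "?gT (?gB u) = u" if "u \<in> ?VB" for u
    unfolding gT_def using the_cnt[of u ?VB] that gB[of u] by simp
  have gTmono: "?gT k < ?gT k'" if "k \<in> ?VT" "k' \<in> ?VT" "k < k'" for k k'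
  proof (rule ccontr)
    assume "\<not> ?gT k < ?gT k'"
    then have "cnt ?VB (?gT k') \<le> cnt ?VB (?gT k)" using cnt_mono by simp
    moreover have "cnt ?VT k < cnt ?VT k'" using cnt_strict that by simp
    ultimately show False using gT[of k] gT[of k'] by simp
  qed
  have gBmono: "?gB u < ?gB u'" if "u \<in> ?VB" "u' \<in> ?VB" "u < u'" for u u'
  proof (rule ccontr)
    assume "\<not> ?gB u < ?gB u'"
    then have "cnt ?VT (?gB u') \<le> cnt ?VT (?gB u)" using cnt_mono by simp
    moreover have "cnt ?VB u < cnt ?VB u'" using cnt_strict that by simp
    ultimately show False using gB[of u] gB[of u'] by simp
  qed
  have gTper: "?gT (k + int n) = ?gT k + int n" for k
  proof -
    have "?gT k + int n \<in> ?VB" using gT[of k] pB unfolding perV_def by simp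
    moreover have "cnt ?VB (?gT k + int n) = cnt ?VT (k + int n) - w"
      using cnt_period[OF n pB, of "?gT k"] cnt_period[OF n pA, of k] cA cB gT[of k] by simp
    ultimately show ?thesis unfolding gT_def by (rule the_cnt)
  qed
  have gBper: "?gB (u + int n) = ?gB u + int n" for u
  proof -
    have "?gB u + int n \<in> ?VT" using gB[of u] pA unfolding perV_def by simp
    moreover have "cnt ?VT (?gB u + int n) = cnt ?VB (u + int n) + w"
      using cnt_period[OF n pB, of u] cnt_period[OF n pA, of "?gB u"] cA cB gB[of u] by simp
    ultimately show ?thesis unfolding gB_def by (rule the_cnt)
  qed
  have MT: "?M (k, True) = (if k \<in> ?VT then (?gT k, False) else (PA n A k, True))" for k
    unfolding build_def by simp
  have MF: "?M (k, False) = (if k \<in> ?VB then (?gB k, True) else (PA n B k, False))" for k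
    unfolding build_def by simp
  note oA = row_okD[OF rA] and oB = row_okD[OF rB]
  have inv: "?M (?M x) = x \<and> ?M x \<noteq> x" for x
  proof -
    obtain k b where x: "x = (k, b)" by force
    show ?thesis
    proof (cases b)
      case True
      then show ?thesis using x MT MF gT gBT oA(3,4,5) by auto
    next
      case False
      then show ?thesis using x MT MF gB gTB oB(3,4,5) by auto
    qed
  qed
  have per: "?M (k + int n, b) = (fst (?M (k, b)) + int n, snd (?M (k, b)))" for k b
  proof (cases b)
    case True
    have "(k + int n \<in> ?VT) = (k \<in> ?VT)" using pA unfolding perV_def by simp
    then show ?thesis using True MT gTper PA_shift[OF n, of A k 1] by simp
  next
    case False
    have "(k + int n \<in> ?VB) = (k \<in> ?VB)" using pB unfolding perV_def by simp
    then show ?thesis using False MF gBper PA_shift[OF n, of B k 1] by simp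
  qed
  have nc: "\<not> (bnd_less a c \<and> bnd_less c (?M a) \<and> bnd_less (?M a) (?M c))" for a c
  proof
    assume h: "bnd_less a c \<and> bnd_less c (?M a) \<and> bnd_less (?M a) (?M c)"
    obtain ka ba where a: "a = (ka, ba)" by force
    obtain kc bc where c: "c = (kc, bc)" by force
    show False
    proof (cases ba)
      case True
      then have bc: "bc" using h a c unfolding bnd_less_def by auto
      have kaV: "ka \<notin> ?VT" using h a c True bc MT unfolding bnd_less_def by (auto split: if_splits)
      have Ma: "?M a = (PA n A ka, True)" using a True MT kaV by simp
      have kcV: "kc \<notin> ?VT" using h Ma c bc MT unfolding bnd_less_def by (auto split: if_splits)
      have Mc: "?M c = (PA n A kc, True)" using c bc MT kcV by simp
      have o: "kc < ka" "PA n A ka < kc" "PA n A kc < PA n A ka"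
        using h a c Ma Mc True bc unfolding bnd_less_def by auto
      show False using oA(9)[OF oA(3)[OF kcV] oA(3)[OF kaV]] oA(4)[OF kcV] oA(4)[OF kaV] o by simp
    next
      case ba: False
      show False
      proof (cases bc)
        case bc: True
        have kaV: "ka \<in> ?VB" using h a c ba bc MF unfolding bnd_less_def by (auto split: if_splits)
        have Ma: "?M a = (?gB ka, True)" using a ba MF kaV by simp
        have kcV: "kc \<notin> ?VT" using h Ma c bc MT unfolding bnd_less_def by (auto split: if_splits)
        have Mc: "?M c = (PA n A kc, True)" using c bc MT kcV by simp
        have o: "?gB ka < kc" "PA n A kc < ?gB ka" using h c Ma Mc bc unfolding bnd_less_def by auto
        show False using oA(8)[OF kcV] gB[of ka] o by blast
      next
        case bc: False
        have o1: "ka < kc" using h a c ba bc unfolding bnd_less_def by auto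
        show False
        proof (cases "ka \<in> ?VB")
          case kaV: True
          have Ma: "?M a = (?gB ka, True)" using a ba MF kaV by simp
          have kcV: "kc \<in> ?VB" using h Ma c bc MF unfolding bnd_less_def by (auto split: if_splits)
          have Mc: "?M c = (?gB kc, True)" using c bc MF kcV by simp
          have "?gB kc < ?gB ka" using h Ma Mc unfolding bnd_less_def by auto
          then show False using gBmono[OF kaV kcV o1] by simp
        next
          case kaV: False
          have Ma: "?M a = (PA n B ka, False)" using a ba MF kaV by simp
          have o2: "kc < PA n B ka" using h Ma c bc unfolding bnd_less_def by auto
          show False
          proof (cases "kc \<in> ?VB")
            case kcV: True
            show False using oB(7)[OF kaV kcV] o1 o2 by simp
          next
            case kcV: False
            have Mc: "?M c = (PA n B kc, False)" using c bc MF kcV by simp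
            have "PA n B ka < PA n B kc" using h Ma Mc unfolding bnd_less_def by auto
            then show False using oB(9)[OF kaV kcV] o1 o2 by simp
          qed
        qed
      qed
    qed
  qed
  obtain k0 where k0: "k0 \<in> ?VT" using oA(2) by auto
  have hv: "has_vertical_edge ?M" unfolding has_vertical_edge_def
    using MT[of k0] k0 by (intro exI[of _ "(k0, True)"]) simp
  have Mdiag: "?M \<in> diagrams_vert n"
    unfolding diagrams_vert_def is_affine_diagram_matching_def using inv per nc hv by blast
  have VrT: "Vr True ?M = ?VT" unfolding Vr_def using MT by auto
  have VrF: "Vr False ?M = ?VB" unfolding Vr_def using MF by auto
  have PrT: "Pr True ?M k = PA n A k" if "k \<notin> ?VT" for k unfolding Pr_def using MT that by simp
  have PrF: "Pr False ?M k = PA n B k" if "k \<notin> ?VB" for k unfolding Pr_def using MF that by simp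
  have PrTv: "Pr True ?M k = ?gT k" if "k \<in> ?VT" for k unfolding Pr_def using MT that by simp
  have "S1 n ?M = A"
    unfolding S1_rowS VrT using rowS_cong[of ?VT "Pr True ?M" "PA n A" n] PrT rowS_PA[OF n AA] by simp
  moreover have "S2 n ?M = B"
    unfolding S2_rowS VrF using rowS_cong[of ?VB "Pr False ?M" "PA n B" n] PrF rowS_PA[OF n BA] by simp
  moreover have "wind ?M = w"
  proof (rule wind_diag[OF Mdiag])
    show "\<forall>e. \<exists>v\<in>Vr True ?M. cnt (Vr True ?M) v = e" unfolding VrT using sA by blast
    show "\<forall>v\<in>Vr True ?M. cnt (Vr False ?M) (Pr True ?M v) = cnt (Vr True ?M) v - w"
      unfolding VrT VrF using PrTv gT by simp
  qed
  ultimately show ?thesis using Mdiag by simp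
qed


theorem lemma3p2p4:
  fixes n :: nat
  assumes "n \<ge> 3"
  shows "(\<forall>D \<in> diagrams_vert n. \<exists>t > 0.
            S1 n D \<in> Ann n \<inter> Inv_t n t \<and> S2 n D \<in> Ann n \<inter> Inv_t n t) \<and>
         bij_betw (\<lambda>D. (S1 n D, S2 n D, wind D)) (diagrams_vert n)
           {(A, B, w). \<exists>t > 0. A \<in> Ann n \<inter> Inv_t n t \<and> B \<in> Ann n \<inter> Inv_t n t}"
proof -
  have n: "n > 0" using assms by simp
  let ?f = "\<lambda>D. (S1 n D, S2 n D, wind D)"
  let ?T = "{(A, B, w::int). \<exists>t > 0. A \<in> Ann n \<inter> Inv_t n t \<and> B \<in> Ann n \<inter> Inv_t n t}"
  have p1: "\<forall>D \<in> diagrams_vert n. \<exists>t > 0.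
            S1 n D \<in> Ann n \<inter> Inv_t n t \<and> S2 n D \<in> Ann n \<inter> Inv_t n t"
    using diag_main(1)[OF n] by blast
  have inj: "inj_on ?f (diagrams_vert n)"
  proof (rule inj_onI)
    fix D D' assume D: "D \<in> diagrams_vert n" and D': "D' \<in> diagrams_vert n" and e: "?f D = ?f D'"
    have "D = build n (S1 n D) (S2 n D) (wind D)" using diag_main(2)[OF n D] by simp
    also have "\<dots> = build n (S1 n D') (S2 n D') (wind D')" using e by simp
    also have "\<dots> = D'" using diag_main(2)[OF n D'] by simp
    finally show "D = D'" .
  qed
  have img: "?f ` diagrams_vert n = ?T"
  proof
    show "?f ` diagrams_vert n \<subseteq> ?T" using p1 by auto
  next
    show "?T \<subseteq> ?f ` diagrams_vert n"
    proof
      fix x assume "x \<in> ?T"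
      then obtain A B :: "nat \<Rightarrow> nat" and w :: int and t :: nat where x: "x = (A, B, w)" and t: "t > 0"
        and A: "A \<in> Ann n \<inter> Inv_t n t" and B: "B \<in> Ann n \<inter> Inv_t n t" by auto
      have b: "build n A B w \<in> diagrams_vert n \<and> S1 n (build n A B w) = A \<and> S2 n (build n A B w) = B
         \<and> wind (build n A B w) = w" by (rule build_main[OF n t A B])
      then have "?f (build n A B w) = x" using x by simp
      then show "x \<in> ?f ` diagrams_vert n" using b by force
    qed
  qed
  show ?thesis using p1 inj img unfolding bij_betw_def by blast
qed

end
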